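(* Let $A=\mathrm{diag}(\Lambda_{11},\dots,\Lambda_{kk})\in\mathbb R^{d\times d}$ be a block diagonal matrix of the form described in the context satisfying condition (C). Let $V\in\mathcal G(s,d)$, let $W$ be a block column echelon basis of $V$, and let $V^\infty=\mathrm{range}(W^\infty)$ with $W^\infty$ as defined in the context. Then $V^\infty\in\mathcal G(s,d)$ and $$\lim_{t\to\infty}\big\|P_{e^{tA}V}-P_{e^{tA}V^\infty}\big\|=0.$$
   Context: Block structure: $d=d_1+\dots+d_k$ with $d_j\in\{1,2\}$; $\Lambda_{jj}=\beta_j\in\mathbb R$ if $d_j=1$, and $\Lambda_{jj}=\begin{pmatrix}\beta_j&-\omega_j/\rho_j\\ \rho_j\omega_j&\beta_j\end{pmatrix}$ with $\omega_j>0$, $0<\rho_j\le1$ if $d_j=2$; moreover $\beta_1\ge\beta_2\ge\dots\ge\beta_k$. Let $J_{\mathbb C}=\{j\in\{1,\dots,k\}:d_j=2\}$. Condition (C): $\beta_j\neq\beta_\nu$ for all $j\in J_{\mathbb C}$ and all $\nu\in\{1,\dots,k\}$, $\nu\ne j$. Block column echelon basis: the rows of a matrix $W\in\mathbb R^{d\times s}$ are partitioned into consecutive blocks of sizes $d_1,\dots,d_k$. A block column echelon basis of $V\in\mathcal G(s,d)$ is a $W\in\mathbb R^{d\times s}$ with $\mathrm{range}(W)=V$ whose columns are partitioned into consecutive groups of sizes $b_1,\dots,b_r\in\{1,2\}$, $\sum_jb_j=s$, such that, writing $W_{ij}\in\mathbb R^{d_i\times b_j}$ for the resulting blocks, there are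 indices $0\le k_1<k_2<\dots<k_r<k$ with $W_{ij}=0$ for $i\le k_j$ and $\mathrm{rank}(W_{k_j+1,j})=b_j$ (so $b_j=1$ whenever $d_{k_j+1}=1$). Every $V\in\mathcal G(s,d)$ admits such a basis. For $j=1,\dots,r$ let $\ell_j\ge1$ be maximal with $k_j+\ell_j\le k$ and $\beta_{k_j+1}=\dots=\beta_{k_j+\ell_j}$. Define $W^\infty\in\mathbb R^{d\times s}$ blockwise by $W^\infty_{ij}=W_{ij}$ if $k_j+1\le i\le k_j+\ell_j$ and $W^\infty_{ij}=0$ otherwise. $P_U$ denotes the orthogonal projection onto a subspace $U$, $\|\cdot\|$ the spectral norm, $\mathcal G(s,d)$ the Grassmannian of $s$-dimensional subspaces of $\mathbb R^d$. *)

theory Defs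
  imports "HOL-Analysis.Analysis"
begin

(* Coordinates of R^d are modelled by a finite type 'n together with a
   bijection idx :: 'n => nat onto {0..<CARD('n)} fixing the ordering of
   coordinates (0-based). Blocks are indexed 1..k, column groups 1..r. *)

(* 0-based offset of the j-th (1-based) block, for block sizes dz *)
definition boff :: "(nat \<Rightarrow> nat) \<Rightarrow> nat \<Rightarrow> nat" where
  "boff dz j = (\<Sum>i\<in>{1..<j}. dz i)"

definition inblk :: "(nat \<Rightarrow> nat) \<Rightarrow> nat \<Rightarrow> nat \<Rightarrow> bool" where
  "inblk dz j r \<longleftrightarrow> boff dz j \<le> r \<and> r < boff dz j + dz j"

definition blockA ::
  "('n::finite \<Rightarrow> nat) \<Rightarrow> nat \<Rightarrow> (nat \<Rightarrow> nat) \<Rightarrow> (nat \<Rightarrow> real) \<Rightarrow> (nat \<Rightarrow> real)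
     \<Rightarrow> (nat \<Rightarrow> real) \<Rightarrow> real^'n^'n" where
  "blockA idx k dz \<beta> \<omega> \<rho> = (\<chi> p q.
     (\<Sum>j\<in>{1..k}. if inblk dz j (idx p) \<and> inblk dz j (idx q) then
        (let a = idx p - boff dz j; b = idx q - boff dz j in
          if a = b then \<beta> j
          else if a = 0 \<and> b = 1 then - \<omega> j / \<rho> j
          else if a = 1 \<and> b = 0 then \<rho> j * \<omega> j
          else 0)
      else 0))"

fun mpow :: "real^'n^'n \<Rightarrow> nat \<Rightarrow> real^'n^'n" where
  "mpow M 0 = mat 1"
| "mpow M (Suc n) = M ** mpow M n"

definition mexp :: "real^'n^'n \<Rightarrow> real^'n^'n" where
  "mexp M = (\<Sum>n. (1 / fact n) *\<^sub>R mpow M n)"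

definition oproj :: "('a::real_inner) set \<Rightarrow> 'a \<Rightarrow> 'a" where
  "oproj U x = (THE y. y \<in> U \<and> (\<forall>u\<in>U. (x - y) \<bullet> u = 0))"

definition grassmannian :: "nat \<Rightarrow> ('a::euclidean_space) set set" where
  "grassmannian s = {V. subspace V \<and> dim V = s}"

(* column c (0-based, nat => real^'n) of W restricted to the rows of block i
   (other entries set to 0): the nonzero part is exactly the block W_ij column *)
definition rowrestr :: "('n::finite \<Rightarrow> nat) \<Rightarrow> (nat \<Rightarrow> nat) \<Rightarrow> nat \<Rightarrow> real^'n \<Rightarrow> real^'n" where
  "rowrestr idx dz i v = (\<chi> p. if inblk dz i (idx p) then v $ p else 0)"

(* rank of the block W_{i,j} whose columns are c0, ..., c0+m-1:
   the dimension of the span of its columns *)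
definition rank_block :: "('n::finite \<Rightarrow> nat) \<Rightarrow> (nat \<Rightarrow> nat) \<Rightarrow> nat \<Rightarrow> (nat \<Rightarrow> real^'n)
     \<Rightarrow> nat \<Rightarrow> nat \<Rightarrow> nat" where
  "rank_block idx dz i w c0 m = dim (span ((\<lambda>c. rowrestr idx dz i (w c)) ` {c0..<c0+m}))"

(* W (columns w 0, ..., w (s-1)) is a block column echelon basis of V, with
   column group sizes b 1..b r and indices kk 1..kk r *)
definition block_col_echelon ::
  "('n::finite \<Rightarrow> nat) \<Rightarrow> nat \<Rightarrow> (nat \<Rightarrow> nat) \<Rightarrow> (real^'n) set \<Rightarrow> nat \<Rightarrow> (nat \<Rightarrow> real^'n)
     \<Rightarrow> nat \<Rightarrow> (nat \<Rightarrow> nat) \<Rightarrow> (nat \<Rightarrow> nat) \<Rightarrow> bool" where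
  "block_col_echelon idx k dz V s w r b kk \<longleftrightarrow>
     span (w ` {..<s}) = V \<and>
     (\<forall>j\<in>{1..r}. b j \<in> {1,2}) \<and> (\<Sum>j\<in>{1..r}. b j) = s \<and>
     (\<forall>j\<in>{1..r}. kk j < k) \<and> (\<forall>j\<in>{1..<r}. kk j < kk (Suc j)) \<and>
     (\<forall>j\<in>{1..r}. \<forall>i\<in>{1..kk j}. \<forall>c\<in>{boff b j..<boff b j + b j}.
         rowrestr idx dz i (w c) = 0) \<and>
     (\<forall>j\<in>{1..r}. rank_block idx dz (Suc (kk j)) w (boff b j) (b j) = b j)"

definition ell :: "nat \<Rightarrow> (nat \<Rightarrow> real) \<Rightarrow> (nat \<Rightarrow> nat) \<Rightarrow> nat \<Rightarrow> nat" where
  "ell k \<beta> kk j = (GREATEST l. 1 \<le> l \<and> kk j + l \<le> k \<and>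
       (\<forall>i\<in>{Suc (kk j)..kk j + l}. \<beta> i = \<beta> (Suc (kk j))))"

definition winf ::
  "('n::finite \<Rightarrow> nat) \<Rightarrow> nat \<Rightarrow> (nat \<Rightarrow> nat) \<Rightarrow> (nat \<Rightarrow> real) \<Rightarrow> (nat \<Rightarrow> real^'n)
     \<Rightarrow> nat \<Rightarrow> (nat \<Rightarrow> nat) \<Rightarrow> (nat \<Rightarrow> nat) \<Rightarrow> nat \<Rightarrow> real^'n" where
  "winf idx k dz \<beta> w r b kk c = (\<Sum>j\<in>{1..r}.
     if boff b j \<le> c \<and> c < boff b j + b j then
       (\<chi> p. if (\<exists>i\<in>{Suc (kk j)..kk j + ell k \<beta> kk j}. inblk dz i (idx p)) then w c $ p else 0)
     else 0)"

end

theory Submission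
  imports Defs "HOL-Real_Asymp.Real_Asymp"
begin


lemma boff_Suc: "1 \<le> j \<Longrightarrow> boff f (Suc j) = boff f j + f j"
  unfolding boff_def by (simp add: atLeastLessThanSuc add.commute)

lemma boff_1[simp]: "boff f 1 = 0" unfolding boff_def by simp

lemma boff_mono: "1 \<le> i \<Longrightarrow> i \<le> j \<Longrightarrow> boff f i \<le> boff f j"
  unfolding boff_def by (rule sum_mono2) auto

lemma boff_le_next: "1 \<le> i \<Longrightarrow> i < j \<Longrightarrow> boff f i + f i \<le> boff f j"
  using boff_mono[of "Suc i" j f] boff_Suc[of i f] by simp

lemma boff_sum: "boff f (Suc m) = (\<Sum>j\<in>{1..m}. f j)"
  unfolding boff_def by (simp add: atLeastLessThanSuc_atLeastAtMost)

lemma inblk_exists: "r < boff f (Suc m) \<Longrightarrow> \<exists>i\<in>{1..m}. inblk f i r"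
proof (induction m)
  case 0 then show ?case by (simp add: boff_def)
next
  case (Suc m)
  show ?case
  proof (cases "r < boff f (Suc m)")
    case True then show ?thesis using Suc.IH by auto
  next
    case False
    then have "inblk f (Suc m) r" using Suc.prems boff_Suc[of "Suc m" f]
      unfolding inblk_def by simp
    then show ?thesis by auto
  qed
qed

lemma inblk_unique: "inblk f i r \<Longrightarrow> inblk f i' r \<Longrightarrow> 1 \<le> i \<Longrightarrow> 1 \<le> i' \<Longrightarrow> i = i'"
proof (rule ccontr)
  assume a: "inblk f i r" "inblk f i' r" "1 \<le> i" "1 \<le> i'" "i \<noteq> i'"
  show False
  proof (cases "i < i'")
    case True
    then show False using boff_le_next[of i i' f] a unfolding inblk_def by auto
  next
    case False
    then have "i' < i" using a by auto
    then show False using boff_le_next[of i' i f] a unfolding inblk_def by auto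
  qed
qed

lemma inblk_ge: "inblk f i r \<Longrightarrow> 1 \<le> i \<Longrightarrow> r < boff f (Suc m) \<Longrightarrow> i \<le> m"
proof (rule ccontr)
  assume a: "inblk f i r" "1 \<le> i" "r < boff f (Suc m)" "\<not> i \<le> m"
  then have "boff f (Suc m) \<le> boff f i" by (intro boff_mono) auto
  then show False using a unfolding inblk_def by auto
qed

lemma sum_groups:
  "(\<Sum>c<boff f (Suc m). g c) = (\<Sum>j\<in>{1..m}. \<Sum>c\<in>{boff f j..<boff f j + f j}. g c)"
proof (induction m)
  case 0 then show ?case by (simp add: boff_def)
next
  case (Suc m)
  have "boff f (Suc (Suc m)) = boff f (Suc m) + f (Suc m)" by (simp add: boff_Suc)
  then have "(\<Sum>c<boff f (Suc (Suc m)). g c) = (\<Sum>c<boff f (Suc m). g c) + (\<Sum>c\<in>{boff f (Suc m)..<boff f (Suc m) + f (Suc m)}. g c)"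
    by (simp add: sum.atLeastLessThan_concat[symmetric] lessThan_atLeast0)
  then show ?case using Suc.IH by simp
qed


locale blk_setup =
  fixes idx :: "'n::finite \<Rightarrow> nat"
    and k :: nat and dz :: "nat \<Rightarrow> nat"
    and \<beta> \<omega> \<rho> :: "nat \<Rightarrow> real"
  assumes idx: "bij_betw idx UNIV {..<CARD('n)}"
    and dz: "\<forall>j\<in>{1..k}. dz j \<in> {1,2}"
    and dsum: "(\<Sum>j\<in>{1..k}. dz j) = CARD('n)"
    and cplx: "\<forall>j\<in>{1..k}. dz j = 2 \<longrightarrow> \<omega> j > 0 \<and> 0 < \<rho> j \<and> \<rho> j \<le> 1"
    and mono: "\<forall>i j. 1 \<le> i \<and> i \<le> j \<and> j \<le> k \<longrightarrow> \<beta> j \<le> \<beta> i"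
begin

abbreviation blk :: "nat \<Rightarrow> real^'n \<Rightarrow> real^'n" where
  "blk i x \<equiv> rowrestr idx dz i x"

definition inB :: "nat \<Rightarrow> real^'n \<Rightarrow> bool" where
  "inB i x \<longleftrightarrow> (\<forall>p. \<not> inblk dz i (idx p) \<longrightarrow> x $ p = 0)"

abbreviation AA :: "real^'n^'n" where
  "AA \<equiv> blockA idx k dz \<beta> \<omega> \<rho>"

lemma idx_lt: "idx p < CARD('n)"
  using idx unfolding bij_betw_def by auto

lemma boff_k: "boff dz (Suc k) = CARD('n)"
  using dsum boff_sum by simp

lemma row_blk: "\<exists>i\<in>{1..k}. inblk dz i (idx p)"
  using inblk_exists[of "idx p" dz k] idx_lt boff_k by simp

lemma row_blk_unique: "inblk dz i (idx p) \<Longrightarrow> inblk dz i' (idx p) \<Longrightarrow> 1 \<le> i \<Longrightarrow> 1 \<le> i' \<Longrightarrow> i = i'"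
  using inblk_unique by blast

lemma inB_blk: "inB i (blk i x)"
  unfolding inB_def rowrestr_def by simp

lemma blk_inB: "inB i x \<Longrightarrow> blk i x = x"
  unfolding inB_def rowrestr_def by (simp add: vec_eq_iff)

lemma blk_other: "inB i y \<Longrightarrow> i \<noteq> i' \<Longrightarrow> 1 \<le> i \<Longrightarrow> 1 \<le> i' \<Longrightarrow> blk i' y = 0"
  unfolding inB_def rowrestr_def by (auto simp: vec_eq_iff dest: row_blk_unique)

lemma linear_blk: "linear (blk i)"
  by (rule linearI) (auto simp: rowrestr_def vec_eq_iff)

lemma blk_add: "blk i (x + y) = blk i x + blk i y"
  and blk_diff: "blk i (x - y) = blk i x - blk i y"
  and blk_scale: "blk i (a *\<^sub>R x) = a *\<^sub>R blk i x"
  and blk_zero: "blk i 0 = 0"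
  by (auto simp: rowrestr_def vec_eq_iff)

lemma blk_sum: "blk i (sum g S) = (\<Sum>x\<in>S. blk i (g x))"
  using linear_sum[OF linear_blk] by (simp add: o_def)

lemma inB_add: "inB i x \<Longrightarrow> inB i y \<Longrightarrow> inB i (x + y)"
  and inB_scale: "inB i x \<Longrightarrow> inB i (a *\<^sub>R x)"
  and inB_diff: "inB i x \<Longrightarrow> inB i y \<Longrightarrow> inB i (x - y)"
  and inB_zero: "inB i 0"
  unfolding inB_def by auto

lemma sum_blk: "(\<Sum>i\<in>{1..k}. blk i x) = x"
proof -
  have "(\<Sum>i\<in>{1..k}. blk i x) $ p = x $ p" for p
  proof -
    obtain i0 where i0: "i0 \<in> {1..k}" "inblk dz i0 (idx p)" using row_blk by blast
    have "(\<Sum>i\<in>{1..k}. blk i x) $ p = (\<Sum>i\<in>{1..k}. if i = i0 then x $ p else 0)"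
      unfolding sum_component rowrestr_def
      by (rule sum.cong) (use i0 row_blk_unique in auto)
    also have "\<dots> = x $ p" using i0 by simp
    finally show ?thesis .
  qed
  then show ?thesis by (simp add: vec_eq_iff)
qed

lemma norm_blk_le: "norm (blk i x) \<le> norm x"
  by (rule norm_le_componentwise_cart) (simp add: rowrestr_def)

definition LL :: "nat \<Rightarrow> nat \<Rightarrow> nat \<Rightarrow> real" where
  "LL j a b = (if a = b then \<beta> j
          else if a = 0 \<and> b = 1 then - \<omega> j / \<rho> j
          else if a = 1 \<and> b = 0 then \<rho> j * \<omega> j
          else 0)"

lemma A_comp:
  assumes "i \<in> {1..k}" "inblk dz i (idx q)"
  shows "AA $ p $ q = (if inblk dz i (idx p) then LL i (idx p - boff dz i) (idx q - boff dz i) else 0)"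
proof -
  have "AA $ p $ q = (\<Sum>j\<in>{1..k}. if j = i then (if inblk dz i (idx p) then LL i (idx p - boff dz i) (idx q - boff dz i) else 0) else 0)"
    unfolding blockA_def LL_def Let_def vec_lambda_beta
    by (rule sum.cong) (use assms row_blk_unique in auto)
  then show ?thesis using assms by simp
qed

lemma A_blk:
  assumes i: "i \<in> {1..k}" and y: "inB i y"
  shows "(AA *v y) $ p = (if inblk dz i (idx p) then
      (\<Sum>q\<in>{q. inblk dz i (idx q)}. LL i (idx p - boff dz i) (idx q - boff dz i) * y $ q) else 0)"
proof -
  have "(AA *v y) $ p = (\<Sum>q\<in>UNIV. AA $ p $ q * y $ q)"
    by (simp add: matrix_vector_mult_def)
  also have "\<dots> = (\<Sum>q\<in>{q. inblk dz i (idx q)}. AA $ p $ q * y $ q)"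
    using y unfolding inB_def by (intro sum.mono_neutral_right) auto
  also have "\<dots> = (\<Sum>q\<in>{q. inblk dz i (idx q)}. (if inblk dz i (idx p) then LL i (idx p - boff dz i) (idx q - boff dz i) else 0) * y $ q)"
    by (rule sum.cong) (use A_comp[OF i] in auto)
  finally show ?thesis by (auto simp: if_distrib)
qed

lemma inB_A: "i \<in> {1..k} \<Longrightarrow> inB i y \<Longrightarrow> inB i (AA *v y)"
  using A_blk unfolding inB_def by simp

definition pos :: "nat \<Rightarrow> 'n" where "pos r = inv_into UNIV idx r"

lemma idx_pos: "r < CARD('n) \<Longrightarrow> idx (pos r) = r"
  unfolding pos_def using idx by (simp add: bij_betw_inv_into_right)

lemma pos_idx: "pos (idx p) = p"
  unfolding pos_def using idx by (simp add: bij_betw_def)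

lemma blk_end: "i \<in> {1..k} \<Longrightarrow> boff dz i + dz i \<le> CARD('n)"
proof -
  assume i: "i \<in> {1..k}"
  show ?thesis
  proof (cases "i = k")
    case True then show ?thesis using boff_k boff_Suc[of k dz] i by simp
  next
    case False
    then have "boff dz i + dz i \<le> boff dz (Suc k)" using i by (intro boff_le_next) auto
    then show ?thesis using boff_k by simp
  qed
qed

lemma real_rows:
  assumes i: "i \<in> {1..k}" "dz i = 1"
  shows "inblk dz i (idx q) \<longleftrightarrow> q = pos (boff dz i)"
proof -
  have e: "boff dz i < CARD('n)" using blk_end[OF i(1)] i by simp
  have ip: "idx (pos (boff dz i)) = boff dz i" using idx_pos[OF e] .
  have "inblk dz i (idx q) \<longleftrightarrow> idx q = boff dz i" using i unfolding inblk_def by auto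
  also have "\<dots> \<longleftrightarrow> q = pos (boff dz i)" using ip pos_idx by metis
  finally show ?thesis .
qed

lemma cplx_rows:
  assumes i: "i \<in> {1..k}" "dz i = 2"
  shows "inblk dz i (idx q) \<longleftrightarrow> q = pos (boff dz i) \<or> q = pos (Suc (boff dz i))"
    and "pos (boff dz i) \<noteq> pos (Suc (boff dz i))"
    and "idx (pos (boff dz i)) = boff dz i" and "idx (pos (Suc (boff dz i))) = Suc (boff dz i)"
proof -
  have e: "boff dz i + 2 \<le> CARD('n)" using blk_end[OF i(1)] i by simp
  show 3: "idx (pos (boff dz i)) = boff dz i" and 4: "idx (pos (Suc (boff dz i))) = Suc (boff dz i)"
    using e idx_pos by auto
  show "pos (boff dz i) \<noteq> pos (Suc (boff dz i))" using 3 4 by (metis n_not_Suc_n)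
  show "inblk dz i (idx q) \<longleftrightarrow> q = pos (boff dz i) \<or> q = pos (Suc (boff dz i))"
  proof
    assume "inblk dz i (idx q)"
    then have "idx q = boff dz i \<or> idx q = Suc (boff dz i)" using i unfolding inblk_def by auto
    then show "q = pos (boff dz i) \<or> q = pos (Suc (boff dz i))" using pos_idx by metis
  next
    assume "q = pos (boff dz i) \<or> q = pos (Suc (boff dz i))"
    then show "inblk dz i (idx q)" using 3 4 i unfolding inblk_def by auto
  qed
qed

lemma A_real:
  assumes i: "i \<in> {1..k}" "dz i = 1" and y: "inB i y"
  shows "AA *v y = \<beta> i *\<^sub>R y"
proof -
  have Q: "{q. inblk dz i (idx q)} = {pos (boff dz i)}" using real_rows[OF i] by auto
  have "(AA *v y) $ p = \<beta> i * y $ p" for p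
    using y A_blk[OF i(1) y, of p] real_rows[OF i] unfolding Q inB_def
    by (auto simp: LL_def)
  then show ?thesis by (simp add: vec_eq_iff)
qed

definition NN :: "nat \<Rightarrow> real^'n \<Rightarrow> real^'n" where
  "NN i y = AA *v y - \<beta> i *\<^sub>R y"

lemma linear_NN: "linear (NN i)"
  using matrix_vector_mul_linear[of AA] unfolding linear_iff NN_def by (auto simp: algebra_simps)

lemma NN_comp:
  assumes i: "i \<in> {1..k}" "dz i = 2" and y: "inB i y"
  shows "NN i y $ p = (if p = pos (boff dz i) then - \<omega> i / \<rho> i * y $ pos (Suc (boff dz i))
      else if p = pos (Suc (boff dz i)) then \<rho> i * \<omega> i * y $ pos (boff dz i) else 0)"
proof -
  note R = cplx_rows[OF i]
  define q0 where "q0 = pos (boff dz i)"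
  define q1 where "q1 = pos (Suc (boff dz i))"
  have Q: "{q. inblk dz i (idx q)} = {q0, q1}" using R(1) unfolding q0_def q1_def by auto
  have d: "q0 \<noteq> q1" and i0: "idx q0 = boff dz i" and i1: "idx q1 = Suc (boff dz i)"
    using R unfolding q0_def q1_def by auto
  have b0: "inblk dz i (boff dz i)" and b1: "inblk dz i (Suc (boff dz i))" using R(1) i0 i1 unfolding q0_def q1_def by metis+
  have A: "(AA *v y) $ p = (if inblk dz i (idx p) then
      LL i (idx p - boff dz i) 0 * y $ q0 + LL i (idx p - boff dz i) 1 * y $ q1 else 0)"
    using A_blk[OF i(1) y, of p] d i0 i1 unfolding Q by simp
  show ?thesis
  proof (cases "p = q0")
    case True
    then show ?thesis using A i0 unfolding NN_def q0_def[symmetric] q1_def[symmetric]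
      by (simp add: LL_def b0 b1)
  next
    case F0: False
    show ?thesis
    proof (cases "p = q1")
      case True
      then show ?thesis using A i1 d b1 unfolding NN_def q0_def[symmetric] q1_def[symmetric]
        by (simp add: LL_def b0 b1)
    next
      case False
      then have "\<not> inblk dz i (idx p)" using F0 R(1) unfolding q0_def q1_def by auto
      then show ?thesis using A F0 False y unfolding NN_def q0_def[symmetric] q1_def[symmetric] inB_def
        by simp
    qed
  qed
qed

lemma inB_NN: "i \<in> {1..k} \<Longrightarrow> inB i y \<Longrightarrow> inB i (NN i y)"
  unfolding NN_def by (intro inB_diff inB_A inB_scale)

lemma NN_NN:
  assumes i: "i \<in> {1..k}" "dz i = 2" and y: "inB i y"
  shows "NN i (NN i y) = - ((\<omega> i)\<^sup>2) *\<^sub>R y"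
proof -
  note R = cplx_rows[OF i]
  have rho: "\<rho> i \<noteq> 0" using cplx i by auto
  note N1 = NN_comp[OF i inB_NN[OF i(1) y]] and N2 = NN_comp[OF i y]
  have "NN i (NN i y) $ p = - ((\<omega> i)\<^sup>2) * y $ p" for p
  proof -
    consider "p = pos (boff dz i)" | "p = pos (Suc (boff dz i))" | "\<not> inblk dz i (idx p)"
      using R(1)[of p] by blast
    then show ?thesis
    proof cases
      case 1 then show ?thesis using N1[of p] N2[of "pos (Suc (boff dz i))"] R(2) rho
        by (simp add: power2_eq_square)
    next
      case 2 then show ?thesis using N1[of p] N2[of "pos (boff dz i)"] R(2) rho
        by (simp add: power2_eq_square)
    next
      case 3 then show ?thesis using N1[of p] y R(1)[of p] unfolding inB_def by auto
    qed
  qed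
  then show ?thesis by (simp add: vec_eq_iff)
qed

lemma A_NN: "AA *v y = \<beta> i *\<^sub>R y + NN i y"
  unfolding NN_def by simp

end


lemma scaleR_mat_vec: "(t *\<^sub>R M) *v (x::real^'n) = t *\<^sub>R (M *v x)"
  by (simp add: vec_eq_iff matrix_vector_mult_def sum_distrib_left mult.assoc)

lemma mat_vec_scaleR: "M *v (t *\<^sub>R (x::real^'n)) = t *\<^sub>R (M *v x)"
  using matrix_vector_mul_linear[of M] unfolding linear_iff by simp

lemma mpow_apply: "mpow M (Suc n) *v x = M *v (mpow M n *v (x::real^'n))"
  by (simp add: matrix_vector_mul_assoc[symmetric])

lemma mpow_scale_apply: "mpow (t *\<^sub>R M) n *v (x::real^'n) = t ^ n *\<^sub>R (mpow M n *v x)"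
proof (induction n)
  case 0 then show ?case by simp
next
  case (Suc n)
  show ?case unfolding mpow_apply Suc scaleR_mat_vec mat_vec_scaleR by simp
qed

lemma norm_mat_le_onorm: "norm (P::real^'n^'n) \<le> real (CARD('n)) * real (CARD('n)) * onorm ((*v) P)"
proof -
  have "norm P \<le> (\<Sum>i\<in>UNIV. norm (P $ i))"
    unfolding norm_vec_def by (rule L2_set_le_sum) simp
  also have "\<dots> \<le> (\<Sum>i\<in>(UNIV::'n set). \<Sum>j\<in>(UNIV::'n set). onorm ((*v) P))"
  proof (rule sum_mono)
    fix i
    have "norm (P $ i) \<le> (\<Sum>j\<in>UNIV. \<bar>P $ i $ j\<bar>)" by (rule norm_le_l1_cart)
    also have "\<dots> \<le> (\<Sum>j\<in>(UNIV::'n set). onorm ((*v) P))"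
      by (rule sum_mono) (rule matrix_component_le_onorm)
    finally show "norm (P $ i) \<le> (\<Sum>j\<in>(UNIV::'n set). onorm ((*v) P))" .
  qed
  also have "\<dots> = real (CARD('n)) * real (CARD('n)) * onorm ((*v) P)" by simp
  finally show ?thesis .
qed

lemma onorm_mpow: "onorm ((*v) (mpow (M::real^'n^'n) n)) \<le> onorm ((*v) M) ^ n"
proof (induction n)
  case 0
  have "(*v) (mat 1 :: real^'n^'n) = (\<lambda>x. x)" by (rule ext) simp
  then show ?case using onorm_id_le by simp
next
  case (Suc n)
  have "(*v) (mpow M (Suc n)) = (*v) M \<circ> (*v) (mpow M n)"
    by (rule ext) (simp add: mpow_apply del: mpow.simps(2))
  then have "onorm ((*v) (mpow M (Suc n))) \<le> onorm ((*v) M) * onorm ((*v) (mpow M n))"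
    using onorm_compose[of "(*v) M" "(*v) (mpow M n)"] by simp
  also have "\<dots> \<le> onorm ((*v) M) * onorm ((*v) M) ^ n"
    by (rule mult_left_mono[OF Suc.IH]) (rule onorm_pos_le, simp)
  finally show ?case by simp
qed

lemma mexp_summable: "summable (\<lambda>n. (1 / fact n) *\<^sub>R mpow (M::real^'n^'n) n)"
proof (rule summable_comparison_test)
  let ?c = "real (CARD('n)) * real (CARD('n))"
  let ?a = "onorm ((*v) M)"
  show "\<exists>N. \<forall>n\<ge>N. norm ((1 / fact n) *\<^sub>R mpow M n) \<le> ?c * (?a ^ n /\<^sub>R fact n)"
  proof (intro exI allI impI)
    fix n :: nat
    have "norm ((1 / fact n) *\<^sub>R mpow M n) = norm (mpow M n) / fact n" by simp
    also have "\<dots> \<le> ?c * ?a ^ n / fact n"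
      by (rule divide_right_mono) (use norm_mat_le_onorm[of "mpow M n"] onorm_mpow[of M n] in
        \<open>auto intro: order_trans mult_left_mono\<close>)
    finally show "norm ((1 / fact n) *\<^sub>R mpow M n) \<le> ?c * (?a ^ n /\<^sub>R fact n)" by (simp add: divide_inverse)
  qed
  show "summable (\<lambda>n. ?c * (?a ^ n /\<^sub>R fact n))"
    using exp_converges[of ?a] by (intro summable_mult) (simp add: sums_iff)
qed

lemma bounded_linear_matvec: "bounded_linear (\<lambda>P::real^'n^'n. P *v y)"
proof -
  have "linear (\<lambda>P::real^'n^'n. P *v y)"
    by (rule linearI) (simp_all add: vec_eq_iff matrix_vector_mult_def sum.distrib sum_distrib_left
        algebra_simps scaleR_mat_vec)
  then show ?thesis by (simp add: linear_conv_bounded_linear)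
qed

lemma mexp_apply_sums: "(\<lambda>n. (1 / fact n) *\<^sub>R (mpow M n *v y)) sums (mexp M *v (y::real^'n))"
proof -
  have "(\<lambda>n. (1 / fact n) *\<^sub>R mpow M n) sums mexp M"
    unfolding mexp_def using mexp_summable summable_sums by blast
  from bounded_linear.sums[OF bounded_linear_matvec this, of y]
  show ?thesis by (simp add: scaleR_mat_vec)
qed


lemma pow_formula:
  fixes M :: "real^'n^'n"
  assumes "M *v y = b *\<^sub>R y + u" "M *v u = b *\<^sub>R u - (w\<^sup>2) *\<^sub>R y" "w \<noteq> 0"
  shows "mpow M n *v y = Re (Complex b w ^ n) *\<^sub>R y + (Im (Complex b w ^ n) / w) *\<^sub>R u"
proof (induction n)
  case 0 then show ?case by simp
next
  case (Suc n)
  let ?z = "Complex b w"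
  have lin: "M *v (p *\<^sub>R y + q *\<^sub>R u) = p *\<^sub>R (M *v y) + q *\<^sub>R (M *v u)" for p q
    using matrix_vector_mul_linear[of M] unfolding linear_iff by simp
  have "mpow M (Suc n) *v y = Re (?z ^ n) *\<^sub>R (b *\<^sub>R y + u) + (Im (?z ^ n) / w) *\<^sub>R (b *\<^sub>R u - (w\<^sup>2) *\<^sub>R y)"
    unfolding mpow_apply Suc lin assms(1,2) ..
  also have "\<dots> = Re (?z ^ Suc n) *\<^sub>R y + (Im (?z ^ Suc n) / w) *\<^sub>R u"
    using assms(3) by (simp add: algebra_simps power2_eq_square scaleR_add_left[symmetric] del: scaleR_add_left) (simp add: field_simps)
  finally show ?case .
qed


context blk_setup begin

definition EE :: "real \<Rightarrow> real^'n^'n" where "EE t = mexp (t *\<^sub>R AA)"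

lemma E_real:
  assumes i: "i \<in> {1..k}" "dz i = 1" and y: "inB i y"
  shows "EE t *v y = exp (t * \<beta> i) *\<^sub>R y"
proof -
  have p: "mpow AA n *v y = \<beta> i ^ n *\<^sub>R y" for n
    by (induction n) (simp_all add: mpow_apply mat_vec_scaleR A_real[OF i y] del: mpow.simps(2))
  have "(\<lambda>n. (1 / fact n) *\<^sub>R (mpow (t *\<^sub>R AA) n *v y)) = (\<lambda>n. ((t * \<beta> i) ^ n /\<^sub>R fact n) *\<^sub>R y)"
    by (rule ext) (simp add: mpow_scale_apply p power_mult_distrib divide_inverse mult.commute)
  moreover have "(\<lambda>n. ((t * \<beta> i) ^ n /\<^sub>R fact n) *\<^sub>R y) sums (exp (t * \<beta> i) *\<^sub>R y)"
    by (rule sums_scaleR_left) (rule exp_converges)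
  ultimately show ?thesis using mexp_apply_sums[of "t *\<^sub>R AA" y] unfolding EE_def
    using sums_unique2 by metis
qed

lemma E_cplx:
  assumes i: "i \<in> {1..k}" "dz i = 2" and y: "inB i y"
  shows "EE t *v y = exp (t * \<beta> i) *\<^sub>R (cos (t * \<omega> i) *\<^sub>R y + (sin (t * \<omega> i) / \<omega> i) *\<^sub>R NN i y)"
proof -
  define z where "z = Complex (\<beta> i) (\<omega> i)"
  have w: "\<omega> i \<noteq> 0" using cplx i by auto
  have a1: "AA *v y = \<beta> i *\<^sub>R y + NN i y" by (rule A_NN)
  have a2': "AA *v NN i y = \<beta> i *\<^sub>R NN i y + NN i (NN i y)" by (rule A_NN)
  have a2: "AA *v NN i y = \<beta> i *\<^sub>R NN i y - ((\<omega> i)\<^sup>2) *\<^sub>R y"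
    unfolding a2' NN_NN[OF i y] by simp
  have p: "mpow AA n *v y = Re (z ^ n) *\<^sub>R y + (Im (z ^ n) / \<omega> i) *\<^sub>R NN i y" for n
    unfolding z_def by (rule pow_formula[OF a1 a2 w])
  define e where "e = exp (complex_of_real t * z)"
  have eqn: "(complex_of_real t * z) ^ n /\<^sub>R fact n = (t ^ n / fact n) *\<^sub>R (z ^ n)" for n
    by (simp add: power_mult_distrib scaleR_conv_of_real divide_inverse mult.commute)
  have s: "(\<lambda>n. (t ^ n / fact n) *\<^sub>R (z ^ n)) sums e"
    unfolding e_def eqn[symmetric] by (rule exp_converges)
  then have sr: "(\<lambda>n. t ^ n / fact n * Re (z ^ n)) sums Re e"
    and si: "(\<lambda>n. t ^ n / fact n * Im (z ^ n)) sums Im e"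
    unfolding sums_complex_iff by simp_all
  have si': "(\<lambda>n. t ^ n / fact n * Im (z ^ n) / \<omega> i) sums (Im e / \<omega> i)"
    by (rule sums_divide[OF si])
  have S2: "(\<lambda>n. (t ^ n / fact n * Re (z ^ n)) *\<^sub>R y + (t ^ n / fact n * Im (z ^ n) / \<omega> i) *\<^sub>R NN i y)
      sums (Re e *\<^sub>R y + (Im e / \<omega> i) *\<^sub>R NN i y)"
    by (rule sums_add[OF sums_scaleR_left[OF sr] sums_scaleR_left[OF si']])
  have X: "(\<lambda>n. (1 / fact n) *\<^sub>R (mpow (t *\<^sub>R AA) n *v y)) =
      (\<lambda>n. (t ^ n / fact n * Re (z ^ n)) *\<^sub>R y + (t ^ n / fact n * Im (z ^ n) / \<omega> i) *\<^sub>R NN i y)"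
  proof (rule ext)
    fix n
    show "(1 / fact n) *\<^sub>R (mpow (t *\<^sub>R AA) n *v y) =
      (t ^ n / fact n * Re (z ^ n)) *\<^sub>R y + (t ^ n / fact n * Im (z ^ n) / \<omega> i) *\<^sub>R NN i y"
      unfolding mpow_scale_apply p scaleR_add_right scaleR_scaleR by simp
  qed
  have S1: "(\<lambda>n. (1 / fact n) *\<^sub>R (mpow (t *\<^sub>R AA) n *v y)) sums (EE t *v y)"
    unfolding EE_def by (rule mexp_apply_sums)
  have E1: "EE t *v y = Re e *\<^sub>R y + (Im e / \<omega> i) *\<^sub>R NN i y"
    by (rule sums_unique2[OF S1[unfolded X] S2])
  have rz: "complex_of_real t * z = Complex (t * \<beta> i) (t * \<omega> i)"
    unfolding z_def by (simp add: complex_eq_iff)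
  have re: "Re e = exp (t * \<beta> i) * cos (t * \<omega> i)" and im: "Im e = exp (t * \<beta> i) * sin (t * \<omega> i)"
    unfolding e_def rz by (simp_all only: Re_exp Im_exp complex.sel)
  show ?thesis unfolding E1 re im scaleR_add_right scaleR_scaleR by simp
qed

end


context blk_setup begin

definition oA :: real where "oA = onorm ((*v) AA)"

definition KB :: "nat \<Rightarrow> real" where
  "KB i = (if dz i = 2 then 1 + (oA + \<bar>\<beta> i\<bar>) / \<omega> i else 1)"

definition Kb :: real where "Kb = (\<Sum>i\<in>{1..k}. KB i)"

lemma oA_nonneg: "0 \<le> oA"
  unfolding oA_def by (rule onorm_pos_le) simp

lemma KB_ge1: "i \<in> {1..k} \<Longrightarrow> 1 \<le> KB i"
  unfolding KB_def using cplx oA_nonneg by auto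

lemma KB_le_Kb: "i \<in> {1..k} \<Longrightarrow> KB i \<le> Kb"
  unfolding Kb_def using KB_ge1
  by (intro member_le_sum) (auto intro: order_trans[OF zero_le_one])

lemma Kb_ge1: "i \<in> {1..k} \<Longrightarrow> 1 \<le> Kb"
  using KB_ge1 KB_le_Kb by (meson order_trans)

lemma NN_bound: "norm (NN i y) \<le> (oA + \<bar>\<beta> i\<bar>) * norm y"
proof -
  have "norm (AA *v y) \<le> oA * norm y"
    unfolding oA_def by (rule onorm) simp
  then show ?thesis unfolding NN_def
    using norm_triangle_ineq4[of "AA *v y" "\<beta> i *\<^sub>R y"] by (simp add: algebra_simps)
qed

lemma rot_bound:
  assumes "dz i = 2" "i \<in> {1..k}"
  shows "norm (c *\<^sub>R x + (s / \<omega> i) *\<^sub>R NN i x) \<le> (\<bar>c\<bar> + \<bar>s\<bar> * (oA + \<bar>\<beta> i\<bar>) / \<omega> i) * norm x"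
proof -
  have w: "\<omega> i > 0" using cplx assms by auto
  have "norm (c *\<^sub>R x + (s / \<omega> i) *\<^sub>R NN i x) \<le> \<bar>c\<bar> * norm x + \<bar>s\<bar> / \<omega> i * norm (NN i x)"
    using norm_triangle_ineq[of "c *\<^sub>R x" "(s / \<omega> i) *\<^sub>R NN i x"] w by (simp add: abs_div)
  also have "\<dots> \<le> \<bar>c\<bar> * norm x + \<bar>s\<bar> / \<omega> i * ((oA + \<bar>\<beta> i\<bar>) * norm x)"
    using w by (intro add_left_mono mult_left_mono NN_bound) auto
  finally show ?thesis by (simp add: algebra_simps add_divide_distrib)
qed

lemma NN_comb: "NN i (a *\<^sub>R u + b *\<^sub>R v) = a *\<^sub>R NN i u + b *\<^sub>R NN i v"
  using linear_NN[of i] unfolding linear_iff by simp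

lemma E_bounds:
  assumes i: "i \<in> {1..k}" and y: "inB i y"
  shows "norm (EE t *v y) \<le> KB i * (exp (t * \<beta> i) * norm y)"
    and "exp (t * \<beta> i) * norm y \<le> KB i * norm (EE t *v y)"
proof -
  have "dz i = 1 \<or> dz i = 2" using dz i by auto
  then have "norm (EE t *v y) \<le> KB i * (exp (t * \<beta> i) * norm y) \<and> exp (t * \<beta> i) * norm y \<le> KB i * norm (EE t *v y)"
  proof
    assume d: "dz i = 1"
    then show ?thesis using E_real[OF i d y, of t] by (simp add: KB_def)
  next
    assume d: "dz i = 2"
    have w: "\<omega> i > 0" using cplx i d by auto
    define c where "c = cos (t * \<omega> i)"
    define s where "s = sin (t * \<omega> i)"
    define R where "R = c *\<^sub>R y + (s / \<omega> i) *\<^sub>R NN i y"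
    have cs: "\<bar>c\<bar> \<le> 1" "\<bar>s\<bar> \<le> 1" "c\<^sup>2 + s\<^sup>2 = 1" unfolding c_def s_def by auto
    have E: "EE t *v y = exp (t * \<beta> i) *\<^sub>R R" unfolding R_def c_def s_def by (rule E_cplx[OF i d y])
    have KB: "KB i = 1 + (oA + \<bar>\<beta> i\<bar>) / \<omega> i" using d by (simp add: KB_def)
    have gen: "norm (a *\<^sub>R x + (b / \<omega> i) *\<^sub>R NN i x) \<le> KB i * norm x" if "\<bar>a\<bar> \<le> 1" "\<bar>b\<bar> \<le> 1" for a b x
    proof -
      have "norm (a *\<^sub>R x + (b / \<omega> i) *\<^sub>R NN i x) \<le> (\<bar>a\<bar> + \<bar>b\<bar> * (oA + \<bar>\<beta> i\<bar>) / \<omega> i) * norm x"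
        by (rule rot_bound[OF d i])
      also have "\<dots> \<le> KB i * norm x"
        unfolding KB using that w oA_nonneg
        by (intro mult_right_mono add_mono divide_right_mono) (auto intro!: mult_left_le_one_le)
      finally show ?thesis .
    qed
    have NR: "NN i R = c *\<^sub>R NN i y - (s * \<omega> i) *\<^sub>R y"
      unfolding R_def NN_comb NN_NN[OF i d y] using w
      by (simp add: power2_eq_square algebra_simps)
    have inv: "c *\<^sub>R R + (- s / \<omega> i) *\<^sub>R NN i R = y"
    proof -
      have "c *\<^sub>R R + (- s / \<omega> i) *\<^sub>R NN i R = (c\<^sup>2 + s\<^sup>2) *\<^sub>R y"
        unfolding NR unfolding R_def using w by (simp add: algebra_simps power2_eq_square)
      then show ?thesis using cs by simp
    qed
    have u: "norm R \<le> KB i * norm y" unfolding R_def by (rule gen) (use cs in auto)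
    have l: "norm y \<le> KB i * norm R"
      using gen[of c "- s" R] cs inv by simp
    have ep: "0 < exp (t * \<beta> i)" by simp
    show ?thesis using u l ep unfolding E by (auto simp: mult_left_mono mult.left_commute)
  qed
  then show "norm (EE t *v y) \<le> KB i * (exp (t * \<beta> i) * norm y)"
    "exp (t * \<beta> i) * norm y \<le> KB i * norm (EE t *v y)" by auto
qed

lemma inB_E: "i \<in> {1..k} \<Longrightarrow> inB i y \<Longrightarrow> inB i (EE t *v y)"
proof -
  assume i: "i \<in> {1..k}" and y: "inB i y"
  have "dz i = 1 \<or> dz i = 2" using dz i by auto
  then show ?thesis
  proof
    assume "dz i = 1" then show ?thesis using E_real[OF i _ y] y inB_scale by auto
  next
    assume d: "dz i = 2"
    show ?thesis unfolding E_cplx[OF i d y]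
      by (intro inB_scale inB_add inB_NN[OF i y] y)
  qed
qed

lemma E_lin: "EE t *v (x + y) = EE t *v x + EE t *v y"
  and E_scale: "EE t *v (a *\<^sub>R x) = a *\<^sub>R (EE t *v x)"
  using matrix_vector_mul_linear[of "EE t"] unfolding linear_iff
  by (auto simp: mat_vec_scaleR)

lemma E_diff: "EE t *v (x - y) = EE t *v x - EE t *v y"
proof -
  have "EE t *v (x - y) + EE t *v y = EE t *v x" by (metis E_lin diff_add_cancel)
  then show ?thesis by (simp add: algebra_simps)
qed

lemma E_sum: "EE t *v (sum g S) = (\<Sum>x\<in>S. EE t *v g x)"
  using linear_sum[OF matrix_vector_mul_linear[of "EE t"]] by (simp add: o_def)

lemma blk_E: "i \<in> {1..k} \<Longrightarrow> blk i (EE t *v x) = EE t *v (blk i x)"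
proof -
  assume i: "i \<in> {1..k}"
  have "blk i (EE t *v x) = blk i (EE t *v (\<Sum>j\<in>{1..k}. blk j x))" using sum_blk by simp
  also have "\<dots> = (\<Sum>j\<in>{1..k}. blk i (EE t *v blk j x))" unfolding E_sum blk_sum ..
  also have "\<dots> = (\<Sum>j\<in>{1..k}. if j = i then EE t *v blk i x else 0)"
  proof (rule sum.cong)
    fix j assume j: "j \<in> {1..k}"
    have ij: "inB j (EE t *v blk j x)" by (rule inB_E[OF j inB_blk])
    show "blk i (EE t *v blk j x) = (if j = i then EE t *v blk i x else 0)"
      using blk_inB[OF ij] blk_other[OF ij, of i] i j by auto
  qed simp
  also have "\<dots> = EE t *v blk i x" using i by simp
  finally show ?thesis .
qed

lemma E_lower: "i \<in> {1..k} \<Longrightarrow> exp (t * \<beta> i) * norm (blk i x) \<le> Kb * norm (EE t *v x)"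
proof -
  assume i: "i \<in> {1..k}"
  have "exp (t * \<beta> i) * norm (blk i x) \<le> KB i * norm (EE t *v blk i x)"
    by (rule E_bounds(2)[OF i inB_blk])
  also have "\<dots> = KB i * norm (blk i (EE t *v x))" using blk_E[OF i] by simp
  also have "\<dots> \<le> Kb * norm (EE t *v x)"
    using KB_le_Kb[OF i] KB_ge1[OF i] norm_blk_le
    by (intro mult_mono) auto
  finally show ?thesis .
qed

lemma E_upper: "i \<in> {1..k} \<Longrightarrow> inB i y \<Longrightarrow> norm (EE t *v y) \<le> Kb * (exp (t * \<beta> i) * norm y)"
  using E_bounds(1)[of i y t] KB_le_Kb[of i]
  by (meson mult_nonneg_nonneg exp_ge_zero norm_ge_zero mult_right_mono order_trans)

end


lemma oproj_char:
  fixes U :: "'a::euclidean_space set"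
  assumes U: "subspace U"
  shows "oproj U x \<in> U \<and> (\<forall>u\<in>U. (x - oproj U x) \<bullet> u = 0)"
proof -
  obtain y z where y: "y \<in> span U" and z: "\<And>w. w \<in> span U \<Longrightarrow> orthogonal z w" and xyz: "x = y + z"
    using orthogonal_subspace_decomp_exists[of U x] by blast
  have sU: "span U = U" using U by (rule span_eq_iff[THEN iffD2])
  have yU: "y \<in> U" using y sU by simp
  have zo: "(x - y) \<bullet> u = 0" if "u \<in> U" for u
  proof -
    have "orthogonal z u" using z[of u] that sU by simp
    then show ?thesis using xyz unfolding orthogonal_def by simp
  qed
  have uniq: "y' = y" if "y' \<in> U" "\<forall>u\<in>U. (x - y') \<bullet> u = 0" for y'
  proof -
    have d: "y - y' \<in> U" using that(1) yU U by (simp add: subspace_diff)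
    have e1: "(x - y') \<bullet> (y - y') = 0" using that(2) d by blast
    have e2: "(x - y) \<bullet> (y - y') = 0" using zo[OF d] .
    have "(y - y') \<bullet> (y - y') = (x - y') \<bullet> (y - y') - (x - y) \<bullet> (y - y')"
      by (simp add: inner_diff_left)
    then have "(y - y') \<bullet> (y - y') = 0" using e1 e2 by simp
    then show ?thesis by simp
  qed
  have "oproj U x = y" unfolding oproj_def
  proof (rule the_equality)
    show "y \<in> U \<and> (\<forall>u\<in>U. (x - y) \<bullet> u = 0)" using yU zo by blast
    show "\<And>y'. y' \<in> U \<and> (\<forall>u\<in>U. (x - y') \<bullet> u = 0) \<Longrightarrow> y' = y" using uniq by blast
  qed
  then show ?thesis using yU zo by simp
qed

lemma oproj_in: "subspace (U::'a::euclidean_space set) \<Longrightarrow> oproj U x \<in> U"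
  using oproj_char[of U x] by (rule conjunct1)

lemma oproj_orth: "subspace (U::'a::euclidean_space set) \<Longrightarrow> u \<in> U \<Longrightarrow> (x - oproj U x) \<bullet> u = 0"
  using oproj_char[of U x] by simp

lemma oproj_unique:
  fixes U :: "'a::euclidean_space set"
  assumes U: "subspace U" and y: "y \<in> U" and o: "\<And>u. u \<in> U \<Longrightarrow> (x - y) \<bullet> u = 0"
  shows "oproj U x = y"
proof -
  have d: "y - oproj U x \<in> U" using oproj_in[OF U] y U by (simp add: subspace_diff)
  have e1: "(x - y) \<bullet> (y - oproj U x) = 0" using o[OF d] .
  have e2: "(x - oproj U x) \<bullet> (y - oproj U x) = 0" using oproj_orth[OF U d] .
  have "(y - oproj U x) \<bullet> (y - oproj U x) = (x - oproj U x) \<bullet> (y - oproj U x) - (x - y) \<bullet> (y - oproj U x)"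
    by (simp add: inner_diff_left)
  then have "(y - oproj U x) \<bullet> (y - oproj U x) = 0" using e1 e2 by simp
  then show ?thesis by simp
qed

lemma oproj_add:
  fixes U :: "'a::euclidean_space set"
  assumes U: "subspace U"
  shows "oproj U (x + x') = oproj U x + oproj U x'"
proof (rule oproj_unique[OF U])
  show "oproj U x + oproj U x' \<in> U" using oproj_in[OF U] U by (simp add: subspace_add)
  fix u assume u: "u \<in> U"
  have "(x + x' - (oproj U x + oproj U x')) \<bullet> u = (x - oproj U x) \<bullet> u + (x' - oproj U x') \<bullet> u"
    by (simp add: algebra_simps inner_diff_left inner_add_left)
  also have "\<dots> = 0" using oproj_orth[OF U u] by simp
  finally show "(x + x' - (oproj U x + oproj U x')) \<bullet> u = 0" .
qed

lemma oproj_pyth: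
  fixes U :: "'a::euclidean_space set"
  assumes U: "subspace U" and u: "u \<in> U"
  shows "(norm (x - u))\<^sup>2 = (norm (x - oproj U x))\<^sup>2 + (norm (oproj U x - u))\<^sup>2"
proof -
  have d: "oproj U x - u \<in> U" using oproj_in[OF U] u U by (simp add: subspace_diff)
  have "orthogonal (x - oproj U x) (oproj U x - u)" unfolding orthogonal_def using oproj_orth[OF U d] .
  then have "(norm ((x - oproj U x) + (oproj U x - u)))\<^sup>2 = (norm (x - oproj U x))\<^sup>2 + (norm (oproj U x - u))\<^sup>2"
    by (rule norm_add_Pythagorean)
  then show ?thesis by simp
qed

lemma oproj_best:
  fixes U :: "'a::euclidean_space set"
  assumes U: "subspace U" and u: "u \<in> U"
  shows "norm (x - oproj U x) \<le> norm (x - u)"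
proof -
  have "(norm (x - oproj U x))\<^sup>2 \<le> (norm (x - u))\<^sup>2" using oproj_pyth[OF U u, of x] by simp
  then show ?thesis using norm_ge_zero power2_le_imp_le by blast
qed

lemma oproj_norm:
  fixes U :: "'a::euclidean_space set"
  assumes U: "subspace U"
  shows "norm (x - oproj U x) \<le> norm x"
  using oproj_best[OF U subspace_0[OF U], of x] by simp

lemma proj_diff:
  fixes U W :: "'a::euclidean_space set"
  assumes U: "subspace U" and W: "subspace W" and th: "0 \<le> \<theta>"
    and HU: "\<And>u. u \<in> U \<Longrightarrow> \<exists>w\<in>W. norm (u - w) \<le> \<theta> * norm u"
    and HW: "\<And>w. w \<in> W \<Longrightarrow> \<exists>u\<in>U. norm (w - u) \<le> \<theta> * norm w"
  shows "norm (oproj U x - oproj W x) \<le> 2 * \<theta> * norm x"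
proof -
  define y where "y = oproj U x"
  define z where "z = x - y"
  define p where "p = oproj W z"
  have yU: "y \<in> U" unfolding y_def by (rule oproj_in[OF U])
  have zo: "\<And>u. u \<in> U \<Longrightarrow> z \<bullet> u = 0" unfolding z_def y_def by (rule oproj_orth[OF U])
  have ny: "norm y \<le> norm x"
  proof -
    have "(norm (x - 0))\<^sup>2 = (norm (x - y))\<^sup>2 + (norm (y - 0))\<^sup>2"
      unfolding y_def by (rule oproj_pyth[OF U subspace_0[OF U]])
    then have "(norm y)\<^sup>2 \<le> (norm x)\<^sup>2" by simp
    then show ?thesis using norm_ge_zero power2_le_imp_le by blast
  qed
  have nz: "norm z \<le> norm x" unfolding z_def y_def by (rule oproj_norm[OF U])
  have split: "oproj U x - oproj W x = (y - oproj W y) - p"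
    unfolding p_def z_def y_def[symmetric] using oproj_add[OF W, of y "x - y"] by simp
  have t1: "norm (y - oproj W y) \<le> \<theta> * norm x"
  proof -
    obtain w where w: "w \<in> W" "norm (y - w) \<le> \<theta> * norm y" using HU[OF yU] by blast
    have "norm (y - oproj W y) \<le> norm (y - w)" by (rule oproj_best[OF W w(1)])
    also have "\<dots> \<le> \<theta> * norm y" by (rule w(2))
    also have "\<dots> \<le> \<theta> * norm x" using ny th by (simp add: mult_left_mono)
    finally show ?thesis .
  qed
  have t2: "norm p \<le> \<theta> * norm x"
  proof -
    have pW: "p \<in> W" unfolding p_def by (rule oproj_in[OF W])
    obtain u where u: "u \<in> U" "norm (p - u) \<le> \<theta> * norm p" using HW[OF pW] by blast
    have "(z - p) \<bullet> p = 0" unfolding p_def by (rule oproj_orth[OF W pW[unfolded p_def]])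
    then have "p \<bullet> (z - p) = 0" by (metis inner_commute)
    then have pp: "p \<bullet> p = p \<bullet> z" by (simp add: inner_diff_right)
    have uz: "u \<bullet> z = 0" using zo[OF u(1)] by (simp add: inner_commute)
    have "p \<bullet> z = (p - u) \<bullet> z" by (simp add: inner_diff_left uz)
    also have "\<dots> \<le> norm (p - u) * norm z" by (rule norm_cauchy_schwarz)
    also have "\<dots> \<le> (\<theta> * norm p) * norm x" using u(2) nz th by (intro mult_mono) auto
    finally have "(norm p)\<^sup>2 \<le> \<theta> * norm p * norm x" using pp by (simp add: power2_norm_eq_inner)
    then have *: "norm p * norm p \<le> norm p * (\<theta> * norm x)" by (simp add: power2_eq_square mult_ac)
    show ?thesis
    proof (cases "norm p = 0")
      case True then show ?thesis using th by simp
    next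
      case False then have "norm p > 0" by simp
      then show ?thesis using * by (simp add: mult_le_cancel_left_pos)
    qed
  qed
  have "norm (oproj U x - oproj W x) \<le> norm (y - oproj W y) + norm p"
    unfolding split by (rule norm_triangle_ineq4)
  also have "\<dots> \<le> 2 * \<theta> * norm x" using t1 t2 by simp
  finally show ?thesis .
qed


lemma indep_bound:
  fixes f :: "nat \<Rightarrow> 'a::euclidean_space"
  assumes F: "finite F" and inj: "inj_on f F" and ind: "independent (f ` F)"
  shows "\<exists>\<mu>>0. \<forall>a. \<mu> * (\<Sum>c\<in>F. \<bar>a c\<bar>) \<le> norm (\<Sum>c\<in>F. a c *\<^sub>R f c)"
proof -
  have ex: "\<forall>c\<in>F. \<exists>K\<ge>0. \<forall>a. \<bar>a c\<bar> \<le> K * norm (\<Sum>c\<in>F. a c *\<^sub>R f c)"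
  proof
    fix c assume c: "c \<in> F"
    obtain g :: "'a \<Rightarrow> real" where g: "linear g" "\<forall>x\<in>f ` F. g x = (if x = f c then 1 else 0)"
      using linear_independent_extend[OF ind, of "\<lambda>x. if x = f c then 1 else 0"] by blast
    obtain K where K: "\<And>x. norm (g x) \<le> norm x * K"
      using bounded_linear.bounded[of g] g(1) linear_conv_bounded_linear by blast
    have "g (\<Sum>c\<in>F. a c *\<^sub>R f c) = a c" for a
    proof -
      have "g (\<Sum>c\<in>F. a c *\<^sub>R f c) = (\<Sum>c'\<in>F. a c' * g (f c'))"
        by (simp add: linear_sum[OF g(1)] linear_scale[OF g(1)] o_def)
      also have "\<dots> = (\<Sum>c'\<in>F. if c' = c then a c else 0)"
        by (rule sum.cong) (use g(2) inj c in \<open>auto simp: inj_on_def\<close>)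
      also have "\<dots> = a c" using c F by simp
      finally show ?thesis .
    qed
    then have "\<bar>a c\<bar> \<le> max K 0 * norm (\<Sum>c\<in>F. a c *\<^sub>R f c)" for a
    proof -
      have "\<bar>a c\<bar> \<le> norm (\<Sum>c\<in>F. a c *\<^sub>R f c) * K"
        using K[of "\<Sum>c\<in>F. a c *\<^sub>R f c"] \<open>\<And>a. g (\<Sum>c\<in>F. a c *\<^sub>R f c) = a c\<close>[of a] by simp
      also have "\<dots> \<le> norm (\<Sum>c\<in>F. a c *\<^sub>R f c) * max K 0" by (simp add: mult_left_mono)
      finally show ?thesis by (simp add: mult.commute)
    qed
    then show "\<exists>K\<ge>0. \<forall>a. \<bar>a c\<bar> \<le> K * norm (\<Sum>c\<in>F. a c *\<^sub>R f c)" by (intro exI[of _ "max K 0"]) auto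
  qed
  obtain K where K: "\<forall>c\<in>F. K c \<ge> 0 \<and> (\<forall>a. \<bar>a c\<bar> \<le> K c * norm (\<Sum>c\<in>F. a c *\<^sub>R f c))"
    using bchoice[OF ex] by blast
  define M where "M = 1 + (\<Sum>c\<in>F. K c)"
  have M: "M > 0" unfolding M_def using K by (smt (verit) sum_nonneg)
  show ?thesis
  proof (intro exI[of _ "1 / M"] conjI allI)
    show "1 / M > 0" using M by simp
    fix a
    have "(\<Sum>c\<in>F. \<bar>a c\<bar>) \<le> (\<Sum>c\<in>F. K c * norm (\<Sum>c\<in>F. a c *\<^sub>R f c))"
      using K by (intro sum_mono) auto
    also have "\<dots> = (\<Sum>c\<in>F. K c) * norm (\<Sum>c\<in>F. a c *\<^sub>R f c)" by (simp add: sum_distrib_right)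
    also have "\<dots> \<le> M * norm (\<Sum>c\<in>F. a c *\<^sub>R f c)" unfolding M_def by (simp add: distrib_right)
    finally show "1 / M * (\<Sum>c\<in>F. \<bar>a c\<bar>) \<le> norm (\<Sum>c\<in>F. a c *\<^sub>R f c)"
      using M by (simp add: field_simps)
  qed
qed

locale ech = blk_setup idx k dz \<beta> \<omega> \<rho>
  for idx :: "'n::finite \<Rightarrow> nat" and k dz \<beta> \<omega> \<rho> +
  fixes s :: nat and r :: nat and b kk :: "nat \<Rightarrow> nat"
  assumes bgr: "\<forall>j\<in>{1..r}. b j \<in> {1,2}" and bsum: "(\<Sum>j\<in>{1..r}. b j) = s"
    and kklt: "\<forall>j\<in>{1..r}. kk j < k" and kkmono: "\<forall>j\<in>{1..<r}. kk j < kk (Suc j)"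
begin

definition G :: "nat \<Rightarrow> nat set" where "G j = {boff b j..<boff b j + b j}"
definition gam :: "nat \<Rightarrow> real" where "gam j = \<beta> (Suc (kk j))"
definition XX :: "(nat \<Rightarrow> real) \<Rightarrow> real \<Rightarrow> real" where
  "XX a t = (\<Sum>j\<in>{1..r}. \<Sum>c\<in>G j. \<bar>a c\<bar> * exp (t * gam j))"

lemma sum_cols: "(\<Sum>c<s. g c) = (\<Sum>j\<in>{1..r}. \<Sum>c\<in>G j. g c)"
  using sum_groups[where f=b and m=r and g=g] boff_sum[of b r] bsum unfolding G_def by simp

lemma G_lt: "j \<in> {1..r} \<Longrightarrow> c \<in> G j \<Longrightarrow> c < s"
proof -
  assume j: "j \<in> {1..r}" and c: "c \<in> G j"
  have "boff b j + b j \<le> boff b (Suc r)"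
  proof (cases "j = r")
    case True then show ?thesis using boff_Suc[of r b] j by simp
  next
    case False then show ?thesis using j by (intro boff_le_next) auto
  qed
  then show ?thesis using c boff_sum[of b r] bsum unfolding G_def by auto
qed

lemma kk_strict: "j \<in> {1..r} \<Longrightarrow> l \<in> {1..r} \<Longrightarrow> j < l \<Longrightarrow> kk j < kk l"
proof (induction l)
  case 0 then show ?case by simp
next
  case (Suc l)
  show ?case
  proof (cases "j = l")
    case True then show ?thesis using kkmono Suc.prems by auto
  next
    case False
    then have "kk j < kk l" using Suc by auto
    also have "kk l < kk (Suc l)" using kkmono Suc.prems False by auto
    finally show ?thesis .
  qed
qed

lemma gam_mono: "j \<in> {1..r} \<Longrightarrow> l \<in> {1..r} \<Longrightarrow> l \<le> j \<Longrightarrow> gam j \<le> gam l"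
proof -
  assume j: "j \<in> {1..r}" and l: "l \<in> {1..r}" and lj: "l \<le> j"
  have "kk l \<le> kk j" using kk_strict[OF l j] lj by (cases "l = j") auto
  moreover have "kk j < k" using kklt j by auto
  ultimately show ?thesis unfolding gam_def using mono[rule_format, of "Suc (kk l)" "Suc (kk j)"] by auto
qed

lemma L1:
  fixes u :: "nat \<Rightarrow> real^'n"
  assumes H1: "\<forall>j\<in>{1..r}. \<forall>c\<in>G j. \<forall>i\<in>{1..kk j}. blk i (u c) = 0"
    and H2: "\<forall>j\<in>{1..r}. \<exists>\<mu>>0. \<forall>a. \<mu> * (\<Sum>c\<in>G j. \<bar>a c\<bar>) \<le> norm (\<Sum>c\<in>G j. a c *\<^sub>R blk (Suc (kk j)) (u c))"
  shows "\<exists>D>0. \<forall>t\<ge>0. \<forall>a S. 0 \<le> S \<longrightarrow> (\<forall>j\<in>{1..r}. exp (t * gam j) * norm (blk (Suc (kk j)) (\<Sum>c<s. a c *\<^sub>R u c)) \<le> S)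
      \<longrightarrow> XX a t \<le> D * S"
proof -
  define B where "B = (\<Sum>c<s. norm (u c))"
  have B: "norm (blk i (u c)) \<le> B" if "j \<in> {1..r}" "c \<in> G j" for i j c
  proof -
    have "norm (blk i (u c)) \<le> norm (u c)" by (rule norm_blk_le)
    also have "\<dots> \<le> B" unfolding B_def using G_lt[OF that] by (intro member_le_sum) auto
    finally show ?thesis .
  qed
  have B0: "0 \<le> B" unfolding B_def by (simp add: sum_nonneg)
  have "m \<le> r \<Longrightarrow> \<exists>D>0. \<forall>t\<ge>0. \<forall>a S. 0 \<le> S \<longrightarrow> (\<forall>j\<in>{1..r}. exp (t * gam j) * norm (blk (Suc (kk j)) (\<Sum>c<s. a c *\<^sub>R u c)) \<le> S)
      \<longrightarrow> (\<Sum>j\<in>{1..m}. \<Sum>c\<in>G j. \<bar>a c\<bar> * exp (t * gam j)) \<le> D * S" for m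
  proof (induction m)
    case 0 then show ?case by (intro exI[of _ 1]) auto
  next
    case (Suc m)
    then obtain D where D: "D > 0" and DH: "\<And>t a S. t \<ge> 0 \<Longrightarrow> 0 \<le> S \<Longrightarrow> (\<forall>j\<in>{1..r}. exp (t * gam j) * norm (blk (Suc (kk j)) (\<Sum>c<s. a c *\<^sub>R u c)) \<le> S)
      \<Longrightarrow> (\<Sum>j\<in>{1..m}. \<Sum>c\<in>G j. \<bar>a c\<bar> * exp (t * gam j)) \<le> D * S" by auto
    define j where "j = Suc m"
    have j: "j \<in> {1..r}" using Suc.prems unfolding j_def by auto
    obtain \<mu> where mu: "\<mu> > 0" and muH: "\<And>a. \<mu> * (\<Sum>c\<in>G j. \<bar>a c\<bar>) \<le> norm (\<Sum>c\<in>G j. a c *\<^sub>R blk (Suc (kk j)) (u c))"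
      using H2 j by blast
    define D' where "D' = D + (1 + B * D) / \<mu>"
    show ?case
    proof (intro exI[of _ D'] conjI allI impI)
      show "D' > 0" unfolding D'_def using D mu B0 by (simp add: add_pos_nonneg)
      fix t a S assume t: "t \<ge> (0::real)" and S0: "0 \<le> S" and hyp: "\<forall>j\<in>{1..r}. exp (t * gam j) * norm (blk (Suc (kk j)) (\<Sum>c<s. a c *\<^sub>R u c)) \<le> S"
      define h where "h = Suc (kk j)"
      define g where "g l = (\<Sum>c\<in>G l. a c *\<^sub>R blk h (u c))" for l
      define Y where "Y = (\<Sum>c\<in>G j. a c *\<^sub>R blk h (u c))"
      define Z where "Z = (\<Sum>l\<in>{1..m}. g l)"
      define Xm where "Xm = (\<Sum>l\<in>{1..m}. \<Sum>c\<in>G l. \<bar>a c\<bar> * exp (t * gam l))"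
      have XmD: "Xm \<le> D * S" unfolding Xm_def by (rule DH[OF t S0 hyp])
      have "blk h (\<Sum>c<s. a c *\<^sub>R u c) = (\<Sum>l\<in>{1..r}. g l)"
        unfolding blk_sum sum_cols g_def blk_scale ..
      also have "\<dots> = (\<Sum>l\<in>{1..j}. g l)"
      proof (rule sum.mono_neutral_right)
        show "\<forall>l\<in>{1..r} - {1..j}. g l = 0"
        proof
          fix l assume l: "l \<in> {1..r} - {1..j}"
          then have l1: "l \<in> {1..r}" and jl: "j < l" by auto
          then have "kk j < kk l" using j by (intro kk_strict) auto
          then have hk: "h \<in> {1..kk l}" unfolding h_def by auto
          show "g l = 0" unfolding g_def
          proof (rule sum.neutral, rule ballI)
            fix c assume "c \<in> G l"
            then have "blk h (u c) = 0" using H1 l1 hk by blast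
            then show "a c *\<^sub>R blk h (u c) = 0" by simp
          qed
        qed
      qed (use j in auto)
      also have "\<dots> = Z + Y" unfolding Z_def Y_def g_def j_def by simp
      finally have split: "blk h (\<Sum>c<s. a c *\<^sub>R u c) = Z + Y" .
      have eZ: "exp (t * gam j) * norm Z \<le> B * Xm"
      proof -
        have "norm Z \<le> (\<Sum>l\<in>{1..m}. \<Sum>c\<in>G l. \<bar>a c\<bar> * norm (blk h (u c)))"
          unfolding Z_def g_def
          by (rule order_trans[OF norm_sum sum_mono], rule order_trans[OF norm_sum]) simp
        then have "exp (t * gam j) * norm Z \<le> exp (t * gam j) * (\<Sum>l\<in>{1..m}. \<Sum>c\<in>G l. \<bar>a c\<bar> * norm (blk h (u c)))"
          by (simp add: mult_left_mono)
        also have "\<dots> = (\<Sum>l\<in>{1..m}. \<Sum>c\<in>G l. \<bar>a c\<bar> * (exp (t * gam j) * norm (blk h (u c))))"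
          by (simp add: sum_distrib_left mult_ac)
        also have "\<dots> \<le> (\<Sum>l\<in>{1..m}. \<Sum>c\<in>G l. \<bar>a c\<bar> * (exp (t * gam l) * B))"
        proof (intro sum_mono mult_left_mono)
          fix l c assume l: "l \<in> {1..m}" and c: "c \<in> G l"
          have lr: "l \<in> {1..r}" using l j unfolding j_def by auto
          have "exp (t * gam j) \<le> exp (t * gam l)"
            using gam_mono[OF j lr] l t unfolding j_def by (simp add: mult_left_mono)
          then show "exp (t * gam j) * norm (blk h (u c)) \<le> exp (t * gam l) * B"
            using B[OF lr c, of h] by (intro mult_mono) auto
        qed simp
        also have "\<dots> = B * Xm" unfolding Xm_def by (simp add: sum_distrib_left mult_ac)
        finally show ?thesis .
      qed
      have m0: "\<mu> * (\<Sum>c\<in>G j. \<bar>a c\<bar>) \<le> norm Y" using muH unfolding Y_def h_def .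
      have m1: "norm Y \<le> norm (Z + Y) + norm Z" using norm_triangle_ineq4[of "Z + Y" Z] by simp
      have m2: "exp (t * gam j) * (\<mu> * (\<Sum>c\<in>G j. \<bar>a c\<bar>)) \<le> exp (t * gam j) * (norm (Z + Y) + norm Z)"
        by (rule mult_left_mono[OF order_trans[OF m0 m1]]) simp
      have m3: "exp (t * gam j) * norm (Z + Y) \<le> S"
        using hyp j unfolding split[symmetric] h_def by blast
      have m4: "exp (t * gam j) * norm Z \<le> B * (D * S)"
        using eZ mult_left_mono[OF XmD B0] by linarith
      have "exp (t * gam j) * (\<mu> * (\<Sum>c\<in>G j. \<bar>a c\<bar>)) \<le> S + B * (D * S)"
        using m2 m3 m4 unfolding distrib_left by linarith
      moreover have e: "(\<Sum>c\<in>G j. \<bar>a c\<bar> * exp (t * gam j)) = exp (t * gam j) * (\<Sum>c\<in>G j. \<bar>a c\<bar>)"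
        by (simp add: sum_distrib_left mult_ac)
      ultimately have "\<mu> * (\<Sum>c\<in>G j. \<bar>a c\<bar> * exp (t * gam j)) \<le> S + B * (D * S)"
        by (simp add: mult.left_commute)
      then have "\<mu> * (\<Sum>c\<in>G j. \<bar>a c\<bar> * exp (t * gam j)) \<le> (1 + B * D) * S"
        by (simp add: algebra_simps)
      then have Xj: "(\<Sum>c\<in>G j. \<bar>a c\<bar> * exp (t * gam j)) \<le> (1 + B * D) * S / \<mu>"
        using mu by (simp add: field_simps)
      have "(\<Sum>l\<in>{1..Suc m}. \<Sum>c\<in>G l. \<bar>a c\<bar> * exp (t * gam l)) = Xm + (\<Sum>c\<in>G j. \<bar>a c\<bar> * exp (t * gam j))"
        unfolding Xm_def j_def by simp
      also have "\<dots> \<le> D * S + (1 + B * D) * S / \<mu>" using XmD Xj by simp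
      also have "\<dots> = D' * S" unfolding D'_def by (simp add: field_simps)
      finally show "(\<Sum>l\<in>{1..Suc m}. \<Sum>c\<in>G l. \<bar>a c\<bar> * exp (t * gam l)) \<le> D' * S" .
    qed
  qed
  from this[of r] show ?thesis unfolding XX_def by simp
qed

end


lemma coef_indep:
  fixes u :: "nat \<Rightarrow> 'a::euclidean_space"
  assumes H: "\<And>a. (\<Sum>c<s. \<bar>a c\<bar>) \<le> D * norm (\<Sum>c<s. a c *\<^sub>R u c)"
  shows "inj_on u {..<s}" and "independent (u ` {..<s})"
proof -
  show inj: "inj_on u {..<s}"
  proof (rule inj_onI, rule ccontr)
    fix c c' assume c: "c \<in> {..<s}" "c' \<in> {..<s}" "u c = u c'" "c \<noteq> c'"
    define a where "a x = (if x = c then 1 else 0) - (if x = c' then 1 else (0::real))" for x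
    have del: "(\<Sum>x<s. (if x = c0 then (1::real) else 0) *\<^sub>R u x) = u c0" if "c0 < s" for c0
    proof -
      have "(\<Sum>x<s. (if x = c0 then (1::real) else 0) *\<^sub>R u x) = (\<Sum>x<s. if x = c0 then u x else 0)"
        by (rule sum.cong) auto
      then show ?thesis using that by simp
    qed
    have "(\<Sum>x<s. a x *\<^sub>R u x) = (\<Sum>x<s. (if x = c then (1::real) else 0) *\<^sub>R u x) - (\<Sum>x<s. (if x = c' then (1::real) else 0) *\<^sub>R u x)"
      unfolding a_def scaleR_diff_left sum_subtractf ..
    also have "\<dots> = 0" using c del by simp
    finally have "(\<Sum>x<s. \<bar>a x\<bar>) \<le> 0" using H[of a] by simp
    moreover have "\<bar>a c\<bar> \<le> (\<Sum>x<s. \<bar>a x\<bar>)" using c by (intro member_le_sum) auto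
    moreover have "a c = 1" using c unfolding a_def by simp
    ultimately show False by simp
  qed
  show "independent (u ` {..<s})"
  proof (rule independent_if_scalars_zero)
    show "finite (u ` {..<s})" by simp
    fix f x assume z: "(\<Sum>x\<in>u ` {..<s}. f x *\<^sub>R x) = 0" and x: "x \<in> u ` {..<s}"
    have "(\<Sum>c<s. f (u c) *\<^sub>R u c) = 0" using z sum.reindex[OF inj, of "\<lambda>x. f x *\<^sub>R x"] by simp
    then have "(\<Sum>c<s. \<bar>f (u c)\<bar>) \<le> 0" using H[of "\<lambda>c. f (u c)"] by simp
    moreover obtain c where c: "c < s" "x = u c" using x by auto
    moreover have "\<bar>f (u c)\<bar> \<le> (\<Sum>c<s. \<bar>f (u c)\<bar>)" using c by (intro member_le_sum) auto
    ultimately show "f x = 0" by simp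
  qed
qed

lemma span_repr:
  fixes u :: "nat \<Rightarrow> 'a::euclidean_space"
  assumes inj: "inj_on u {..<s}" and x: "x \<in> span (u ` {..<s})"
  shows "\<exists>a. x = (\<Sum>c<s. a c *\<^sub>R u c)"
proof -
  obtain f where "x = (\<Sum>v\<in>u ` {..<s}. f v *\<^sub>R v)" using x span_finite[of "u ` {..<s}"] by auto
  then have "x = (\<Sum>c<s. f (u c) *\<^sub>R u c)" using sum.reindex[OF inj, of "\<lambda>x. f x *\<^sub>R x"] by simp
  then show ?thesis by (intro exI[of _ "\<lambda>c. f (u c)"])
qed

lemma exp_neg_tendsto: "d < 0 \<Longrightarrow> ((\<lambda>t::real. exp (t * d)) \<longlongrightarrow> 0) at_top"
  by real_asymp

context ech begin

lemma H2_from_rank: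
  fixes u :: "nat \<Rightarrow> real^'n"
  assumes j: "j \<in> {1..r}" and rk: "rank_block idx dz h u (boff b j) (b j) = b j"
  shows "\<exists>\<mu>>0. \<forall>a. \<mu> * (\<Sum>c\<in>G j. \<bar>a c\<bar>) \<le> norm (\<Sum>c\<in>G j. a c *\<^sub>R blk h (u c))"
proof -
  define T where "T = (\<lambda>c. blk h (u c)) ` G j"
  have fT: "finite T" unfolding T_def G_def by simp
  have cG: "card (G j) = b j" unfolding G_def by simp
  have dT: "dim (span T) = b j" using rk unfolding rank_block_def T_def G_def .
  have "dim (span T) \<le> card T" using dim_le_card[of "span T" T] fT by simp
  moreover have "card T \<le> card (G j)" unfolding T_def G_def by (rule card_image_le) simp
  ultimately have cT: "card T = card (G j)" using dT cG by simp
  have inj: "inj_on (\<lambda>c. blk h (u c)) (G j)"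
    by (rule eq_card_imp_inj_on) (use cT in \<open>auto simp: G_def T_def\<close>)
  have "card T = dim (span T)" using cT dT cG by simp
  then have ind: "independent T"
    using card_eq_dim[of T "span T"] fT span_superset[of T] by blast
  show ?thesis by (rule indep_bound) (use inj ind in \<open>auto simp: G_def T_def\<close>)
qed

lemma ell_props:
  assumes j: "j \<in> {1..r}"
  shows "1 \<le> ell k \<beta> kk j" and "kk j + ell k \<beta> kk j \<le> k"
    and "\<And>i. i \<in> {Suc (kk j)..kk j + ell k \<beta> kk j} \<Longrightarrow> \<beta> i = gam j"
    and "\<And>i. kk j + ell k \<beta> kk j < i \<Longrightarrow> i \<le> k \<Longrightarrow> \<beta> i < gam j"
proof -
  define P where "P = (\<lambda>l. 1 \<le> l \<and> kk j + l \<le> k \<and> (\<forall>i\<in>{Suc (kk j)..kk j + l}. \<beta> i = \<beta> (Suc (kk j))))"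
  have Pd: "P l \<longleftrightarrow> 1 \<le> l \<and> kk j + l \<le> k \<and> (\<forall>i\<in>{Suc (kk j)..kk j + l}. \<beta> i = \<beta> (Suc (kk j)))" for l
    unfolding P_def by simp
  define g where "g = ell k \<beta> kk j"
  have e: "g = Greatest P" unfolding g_def ell_def P_def by simp
  have kj: "kk j < k" using kklt j by blast
  have P1: "P 1" unfolding Pd using kj by auto
  have bd: "\<And>y. P y \<Longrightarrow> y \<le> k" unfolding Pd by auto
  have PG: "P g" unfolding e by (rule GreatestI_nat[where P=P and k=1 and b=k, OF P1 bd])
  have gmax: "y \<le> g" if "P y" for y unfolding e by (rule Greatest_le_nat[where P=P and k=y and b=k, OF that bd])
  have PG': "1 \<le> g" "kk j + g \<le> k" "\<And>i. i \<in> {Suc (kk j)..kk j + g} \<Longrightarrow> \<beta> i = \<beta> (Suc (kk j))"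
    using PG unfolding Pd by blast+
  show "1 \<le> ell k \<beta> kk j" and "kk j + ell k \<beta> kk j \<le> k" using PG' unfolding g_def by auto
  show "\<And>i. i \<in> {Suc (kk j)..kk j + ell k \<beta> kk j} \<Longrightarrow> \<beta> i = gam j"
    using PG'(3) unfolding gam_def g_def by blast
  fix i assume i: "kk j + ell k \<beta> kk j < i" "i \<le> k"
  define m where "m = Suc (kk j + g)"
  have mi: "m \<le> i" "m \<le> k" using i unfolding m_def g_def by auto
  have ne: "\<beta> m \<noteq> gam j"
  proof
    assume eq: "\<beta> m = gam j"
    have all: "\<beta> i' = \<beta> (Suc (kk j))" if i': "i' \<in> {Suc (kk j)..kk j + Suc g}" for i'
    proof (cases "i' = m")
      case True then show ?thesis using eq unfolding gam_def by simp
    next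
      case False
      then have "i' \<in> {Suc (kk j)..kk j + g}" using i' unfolding m_def by auto
      then show ?thesis by (rule PG'(3))
    qed
    have "P (Suc g)" unfolding Pd
    proof (intro conjI ballI)
      show "1 \<le> Suc g" by simp
      show "kk j + Suc g \<le> k" using mi unfolding m_def by simp
    qed (rule all)
    then have "Suc g \<le> g" by (rule gmax)
    then show False by simp
  qed
  have "\<beta> m \<le> gam j" unfolding gam_def using mono[rule_format, of "Suc (kk j)" m] mi unfolding m_def by auto
  moreover have "\<beta> i \<le> \<beta> m" using mono[rule_format, of m i] mi i(2) unfolding m_def by auto
  ultimately show "\<beta> i < gam j" using ne by simp
qed

definition II :: "nat \<Rightarrow> nat set" where "II j = {Suc (kk j)..kk j + ell k \<beta> kk j}"

lemma II_sub: "j \<in> {1..r} \<Longrightarrow> II j \<subseteq> {1..k}"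
  using ell_props(2) unfolding II_def by auto

lemma rowsel_sum:
  assumes I: "I \<subseteq> {1..k}"
  shows "(\<chi> p. if (\<exists>i\<in>I. inblk dz i (idx p)) then x $ p else 0) = (\<Sum>i\<in>I. blk i x)"
proof -
  have fI: "finite I" using I finite_subset by blast
  have "(\<Sum>i\<in>I. blk i x) $ p = (if (\<exists>i\<in>I. inblk dz i (idx p)) then x $ p else 0)" for p
  proof (cases "\<exists>i\<in>I. inblk dz i (idx p)")
    case True
    then obtain i0 where i0: "i0 \<in> I" "inblk dz i0 (idx p)" by blast
    have key: "inblk dz i (idx p) \<longleftrightarrow> i = i0" if i: "i \<in> I" for i
    proof -
      have "i \<in> {1..k}" "i0 \<in> {1..k}" using I i i0(1) by blast+
      then show ?thesis using i0 row_blk_unique[of i p i0] by auto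
    qed
    have "(\<Sum>i\<in>I. blk i x) $ p = (\<Sum>i\<in>I. (if inblk dz i (idx p) then x $ p else 0))"
      by (simp add: sum_component rowrestr_def)
    also have "\<dots> = (\<Sum>i\<in>I. if i = i0 then x $ p else 0)" by (rule sum.cong) (auto simp: key)
    also have "\<dots> = x $ p" using i0 fI by simp
    finally show ?thesis using True by simp
  next
    case False
    then show ?thesis unfolding sum_component rowrestr_def by simp
  qed
  then show ?thesis by (simp add: vec_eq_iff)
qed

lemma blk_of_sum:
  assumes I: "I \<subseteq> {1..k}" and i: "i \<in> {1..k}"
  shows "blk i (\<Sum>i'\<in>I. blk i' x) = (if i \<in> I then blk i x else 0)"
proof -
  have fI: "finite I" using I finite_subset by blast
  have "blk i (\<Sum>i'\<in>I. blk i' x) = (\<Sum>i'\<in>I. if i' = i then blk i x else 0)"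
    unfolding blk_sum
  proof (rule sum.cong)
    fix i' assume i': "i' \<in> I"
    show "blk i (blk i' x) = (if i' = i then blk i x else 0)"
      using blk_inB[OF inB_blk] blk_other[OF inB_blk, of i' i x] i' I i by auto
  qed simp
  also have "\<dots> = (if i \<in> I then blk i x else 0)" using fI by simp
  finally show ?thesis .
qed

end


locale ech2 = ech idx k dz \<beta> \<omega> \<rho> s r b kk
  for idx :: "'n::finite \<Rightarrow> nat" and k dz \<beta> \<omega> \<rho> s r b kk +
  fixes V :: "(real^'n) set" and w :: "nat \<Rightarrow> real^'n"
  assumes spanV: "span (w ` {..<s}) = V"
    and zeroW: "\<forall>j\<in>{1..r}. \<forall>i\<in>{1..kk j}. \<forall>c\<in>{boff b j..<boff b j + b j}. rowrestr idx dz i (w c) = 0"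
    and rankW: "\<forall>j\<in>{1..r}. rank_block idx dz (Suc (kk j)) w (boff b j) (b j) = b j"
begin

abbreviation wi :: "nat \<Rightarrow> real^'n" where "wi \<equiv> winf idx k dz \<beta> w r b kk"

lemma winf_eq:
  assumes j: "j \<in> {1..r}" and c: "c \<in> G j"
  shows "wi c = (\<Sum>i\<in>II j. blk i (w c))"
proof -
  have iff: "(boff b j' \<le> c \<and> c < boff b j' + b j') \<longleftrightarrow> j' = j" if j': "j' \<in> {1..r}" for j'
    using c j j' inblk_unique[of b j c j'] unfolding G_def inblk_def by auto
  have "wi c = (\<Sum>j'\<in>{1..r}. if j' = j then (\<chi> p. if (\<exists>i\<in>{Suc (kk j')..kk j' + ell k \<beta> kk j'}. inblk dz i (idx p)) then w c $ p else 0) else 0)"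
    unfolding winf_def by (intro sum.cong refl) (simp add: iff)
  also have "\<dots> = (\<chi> p. if (\<exists>i\<in>II j. inblk dz i (idx p)) then w c $ p else 0)" using j unfolding II_def by simp
  also have "\<dots> = (\<Sum>i\<in>II j. blk i (w c))" by (rule rowsel_sum[OF II_sub[OF j]])
  finally show ?thesis .
qed

lemma w_H1: "\<forall>j\<in>{1..r}. \<forall>c\<in>G j. \<forall>i\<in>{1..kk j}. blk i (w c) = 0"
  using zeroW unfolding G_def by blast

lemma wi_H1: "\<forall>j\<in>{1..r}. \<forall>c\<in>G j. \<forall>i\<in>{1..kk j}. blk i (wi c) = 0"
proof (intro ballI)
  fix j c i assume j: "j \<in> {1..r}" and c: "c \<in> G j" and i: "i \<in> {1..kk j}"
  have "kk j < k" using kklt j by blast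
  then have ik: "i \<in> {1..k}" using i by auto
  have "i \<notin> II j" using i unfolding II_def by auto
  then show "blk i (wi c) = 0" unfolding winf_eq[OF j c] blk_of_sum[OF II_sub[OF j] ik] by simp
qed

lemma wi_lead: "j \<in> {1..r} \<Longrightarrow> c \<in> G j \<Longrightarrow> blk (Suc (kk j)) (wi c) = blk (Suc (kk j)) (w c)"
proof -
  assume j: "j \<in> {1..r}" and c: "c \<in> G j"
  have h: "Suc (kk j) \<in> II j" using ell_props(1)[OF j] unfolding II_def by auto
  have "kk j < k" using kklt j by blast
  then have hk: "Suc (kk j) \<in> {1..k}" by auto
  show ?thesis unfolding winf_eq[OF j c] blk_of_sum[OF II_sub[OF j] hk] using h by simp
qed

lemma w_H2: "\<forall>j\<in>{1..r}. \<exists>\<mu>>0. \<forall>a. \<mu> * (\<Sum>c\<in>G j. \<bar>a c\<bar>) \<le> norm (\<Sum>c\<in>G j. a c *\<^sub>R blk (Suc (kk j)) (w c))"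
  using H2_from_rank rankW by blast

lemma wi_H2: "\<forall>j\<in>{1..r}. \<exists>\<mu>>0. \<forall>a. \<mu> * (\<Sum>c\<in>G j. \<bar>a c\<bar>) \<le> norm (\<Sum>c\<in>G j. a c *\<^sub>R blk (Suc (kk j)) (wi c))"
proof
  fix j assume j: "j \<in> {1..r}"
  have "rank_block idx dz (Suc (kk j)) wi (boff b j) (b j) = rank_block idx dz (Suc (kk j)) w (boff b j) (b j)"
    unfolding rank_block_def using wi_lead[OF j] unfolding G_def by (metis (no_types, lifting) image_cong)
  then have "rank_block idx dz (Suc (kk j)) wi (boff b j) (b j) = b j" using rankW j by simp
  then show "\<exists>\<mu>>0. \<forall>a. \<mu> * (\<Sum>c\<in>G j. \<bar>a c\<bar>) \<le> norm (\<Sum>c\<in>G j. a c *\<^sub>R blk (Suc (kk j)) (wi c))"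
    by (rule H2_from_rank[OF j])
qed

definition fc :: "nat \<Rightarrow> nat \<Rightarrow> real \<Rightarrow> real" where
  "fc j c t = (\<Sum>i\<in>{1..k} - II j. Kb * exp (t * (\<beta> i - gam j)) * norm (blk i (w c)))"

lemma fc_nonneg: "0 \<le> fc j c t"
proof -
  have "0 \<le> Kb" unfolding Kb_def using KB_ge1 by (intro sum_nonneg) (auto intro: order_trans[OF zero_le_one])
  then show ?thesis unfolding fc_def by (intro sum_nonneg) auto
qed

lemma tail_bound:
  assumes j: "j \<in> {1..r}" and c: "c \<in> G j"
  shows "norm (EE t *v (w c - wi c)) \<le> exp (t * gam j) * fc j c t"
proof -
  have sub: "II j \<subseteq> {1..k}" by (rule II_sub[OF j])
  have "w c = (\<Sum>i\<in>{1..k}. blk i (w c))" using sum_blk by simp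
  also have "\<dots> = (\<Sum>i\<in>{1..k} - II j. blk i (w c)) + (\<Sum>i\<in>II j. blk i (w c))"
    by (rule sum.subset_diff[OF sub]) simp
  finally have "w c - wi c = (\<Sum>i\<in>{1..k} - II j. blk i (w c))"
    unfolding winf_eq[OF j c] by (simp add: algebra_simps)
  then have "norm (EE t *v (w c - wi c)) = norm (\<Sum>i\<in>{1..k} - II j. EE t *v blk i (w c))"
    by (simp add: E_sum)
  also have "\<dots> \<le> (\<Sum>i\<in>{1..k} - II j. norm (EE t *v blk i (w c)))" by (rule norm_sum)
  also have "\<dots> \<le> (\<Sum>i\<in>{1..k} - II j. exp (t * gam j) * (Kb * exp (t * (\<beta> i - gam j)) * norm (blk i (w c))))"
  proof (rule sum_mono)
    fix i assume i: "i \<in> {1..k} - II j"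
    have "norm (EE t *v blk i (w c)) \<le> Kb * (exp (t * \<beta> i) * norm (blk i (w c)))"
      using i by (intro E_upper inB_blk) auto
    also have "\<dots> = exp (t * gam j) * (Kb * exp (t * (\<beta> i - gam j)) * norm (blk i (w c)))"
      by (simp add: algebra_simps exp_add[symmetric])
    finally show "norm (EE t *v blk i (w c)) \<le> exp (t * gam j) * (Kb * exp (t * (\<beta> i - gam j)) * norm (blk i (w c)))" .
  qed
  also have "\<dots> = exp (t * gam j) * fc j c t" unfolding fc_def by (simp add: sum_distrib_left)
  finally show ?thesis .
qed

lemma fc_tendsto:
  assumes j: "j \<in> {1..r}" and c: "c \<in> G j"
  shows "((\<lambda>t. fc j c t) \<longlongrightarrow> 0) at_top"
  unfolding fc_def
proof (rule tendsto_null_sum)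
  fix i assume i: "i \<in> {1..k} - II j"
  show "((\<lambda>t. Kb * exp (t * (\<beta> i - gam j)) * norm (blk i (w c))) \<longlongrightarrow> 0) at_top"
  proof (cases "i \<le> kk j")
    case True
    then have "blk i (w c) = 0" using w_H1 j c i by auto
    then show ?thesis by simp
  next
    case False
    then have "kk j + ell k \<beta> kk j < i" using i unfolding II_def by auto
    then have "\<beta> i - gam j < 0" using ell_props(4)[OF j] i by auto
    from tendsto_mult_right_zero[OF tendsto_mult_left_zero[OF exp_neg_tendsto[OF this]]]
    show ?thesis by (simp add: mult_ac)
  qed
qed

end


lemma onorm_nonneg_of_bound:
  fixes f :: "'a::real_normed_vector \<Rightarrow> 'b::real_normed_vector"
  assumes "\<And>x. norm (f x) \<le> B * norm x"
  shows "0 \<le> onorm f"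
proof -
  have bdd: "bdd_above (range (\<lambda>x. norm (f x) / norm x))"
  proof (rule bdd_aboveI2)
    fix x
    have m: "norm (f x) \<le> max B 0 * norm x"
      using assms[of x] mult_right_mono[OF max.cobounded1[of B 0] norm_ge_zero[of x]] by linarith
    show "norm (f x) / norm x \<le> max B 0"
      using m by (cases "x = 0") (auto simp: divide_le_eq)
  qed
  have "norm (f 0) / norm (0::'a) \<le> (SUP x. norm (f x) / norm x)"
    by (rule cSUP_upper[OF _ bdd]) simp
  then show ?thesis unfolding onorm_def by simp
qed

context ech2 begin

lemma sum_cols_abs: "XX a 0 = (\<Sum>c<s. \<bar>a c\<bar>)"
  unfolding XX_def sum_cols by simp

lemma L_w: "\<exists>D>0. \<forall>t\<ge>0. \<forall>a S. 0 \<le> S \<longrightarrow> (\<forall>j\<in>{1..r}. exp (t * gam j) * norm (blk (Suc (kk j)) (\<Sum>c<s. a c *\<^sub>R w c)) \<le> S)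
      \<longrightarrow> XX a t \<le> D * S"
  by (rule L1[OF w_H1 w_H2])

lemma L_wi: "\<exists>D>0. \<forall>t\<ge>0. \<forall>a S. 0 \<le> S \<longrightarrow> (\<forall>j\<in>{1..r}. exp (t * gam j) * norm (blk (Suc (kk j)) (\<Sum>c<s. a c *\<^sub>R wi c)) \<le> S)
      \<longrightarrow> XX a t \<le> D * S"
  by (rule L1[OF wi_H1 wi_H2])

lemma lower_E:
  fixes u :: "nat \<Rightarrow> real^'n"
  assumes D: "\<forall>t\<ge>0. \<forall>a S. 0 \<le> S \<longrightarrow> (\<forall>j\<in>{1..r}. exp (t * gam j) * norm (blk (Suc (kk j)) (\<Sum>c<s. a c *\<^sub>R u c)) \<le> S)
      \<longrightarrow> XX a t \<le> D * S" and t: "0 \<le> t"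
  shows "XX a t \<le> D * (Kb * norm (EE t *v (\<Sum>c<s. a c *\<^sub>R u c)))"
proof -
  have h: "\<forall>j\<in>{1..r}. exp (t * gam j) * norm (blk (Suc (kk j)) (\<Sum>c<s. a c *\<^sub>R u c)) \<le> Kb * norm (EE t *v (\<Sum>c<s. a c *\<^sub>R u c))"
  proof
    fix j assume j: "j \<in> {1..r}"
    have "kk j < k" using kklt j by blast
    then have "Suc (kk j) \<in> {1..k}" by auto
    then show "exp (t * gam j) * norm (blk (Suc (kk j)) (\<Sum>c<s. a c *\<^sub>R u c)) \<le> Kb * norm (EE t *v (\<Sum>c<s. a c *\<^sub>R u c))"
      unfolding gam_def by (rule E_lower)
  qed
  have "0 \<le> Kb" unfolding Kb_def using KB_ge1 by (intro sum_nonneg) (auto intro: order_trans[OF zero_le_one])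
  then show ?thesis using D t h by simp
qed

lemma indep_at0:
  fixes u :: "nat \<Rightarrow> real^'n"
  assumes D: "\<forall>t\<ge>0. \<forall>a S. 0 \<le> S \<longrightarrow> (\<forall>j\<in>{1..r}. exp (t * gam j) * norm (blk (Suc (kk j)) (\<Sum>c<s. a c *\<^sub>R u c)) \<le> S)
      \<longrightarrow> XX a t \<le> D * S"
  shows "inj_on u {..<s}" "independent (u ` {..<s})"
proof -
  have "(\<Sum>c<s. \<bar>a c\<bar>) \<le> D * norm (\<Sum>c<s. a c *\<^sub>R u c)" for a
  proof -
    have "\<forall>j\<in>{1..r}. exp (0 * gam j) * norm (blk (Suc (kk j)) (\<Sum>c<s. a c *\<^sub>R u c)) \<le> norm (\<Sum>c<s. a c *\<^sub>R u c)"
      using norm_blk_le by simp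
    then show ?thesis using D sum_cols_abs by auto
  qed
  then show "inj_on u {..<s}" "independent (u ` {..<s})" using coef_indep by blast+
qed

lemma conj1: "span (wi ` {..<s}) \<in> grassmannian s"
proof -
  obtain D where "D > 0" and D: "\<forall>t\<ge>0. \<forall>a S. 0 \<le> S \<longrightarrow> (\<forall>j\<in>{1..r}. exp (t * gam j) * norm (blk (Suc (kk j)) (\<Sum>c<s. a c *\<^sub>R wi c)) \<le> S)
      \<longrightarrow> XX a t \<le> D * S" using L_wi by blast
  note I = indep_at0[OF D]
  have "dim (span (wi ` {..<s})) = card (wi ` {..<s})" by (rule dim_span_eq_card_independent[OF I(2)])
  also have "\<dots> = s" using card_image[OF I(1)] by simp
  finally show ?thesis unfolding grassmannian_def by (simp add: subspace_span)
qed

definition FF :: "real \<Rightarrow> real" where "FF t = (\<Sum>j\<in>{1..r}. \<Sum>c\<in>G j. fc j c t)"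

lemma FF_nonneg: "0 \<le> FF t"
  unfolding FF_def by (intro sum_nonneg fc_nonneg)

lemma fc_le_FF: "j \<in> {1..r} \<Longrightarrow> c \<in> G j \<Longrightarrow> fc j c t \<le> FF t"
proof -
  assume j: "j \<in> {1..r}" and c: "c \<in> G j"
  have "fc j c t \<le> (\<Sum>c\<in>G j. fc j c t)" using c by (intro member_le_sum fc_nonneg) (auto simp: G_def)
  also have "\<dots> \<le> FF t" unfolding FF_def using j
    by (intro member_le_sum[of j "{1..r}" "\<lambda>j. \<Sum>c\<in>G j. fc j c t"] sum_nonneg fc_nonneg) auto
  finally show ?thesis .
qed

lemma FF_tendsto: "(FF \<longlongrightarrow> 0) at_top"
  unfolding FF_def[abs_def]
  by (intro tendsto_null_sum fc_tendsto) auto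

lemma diff_bound:
  "norm (EE t *v (\<Sum>c<s. a c *\<^sub>R w c) - EE t *v (\<Sum>c<s. a c *\<^sub>R wi c)) \<le> FF t * XX a t"
proof -
  have "EE t *v (\<Sum>c<s. a c *\<^sub>R w c) - EE t *v (\<Sum>c<s. a c *\<^sub>R wi c) = (\<Sum>c<s. a c *\<^sub>R (EE t *v (w c - wi c)))"
    unfolding E_diff[symmetric] sum_subtractf[symmetric] scaleR_diff_right[symmetric] E_sum E_scale ..
  then have "norm (EE t *v (\<Sum>c<s. a c *\<^sub>R w c) - EE t *v (\<Sum>c<s. a c *\<^sub>R wi c)) \<le> (\<Sum>c<s. \<bar>a c\<bar> * norm (EE t *v (w c - wi c)))"
    using norm_sum[of "\<lambda>c. a c *\<^sub>R (EE t *v (w c - wi c))" "{..<s}"] by simp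
  also have "\<dots> = (\<Sum>j\<in>{1..r}. \<Sum>c\<in>G j. \<bar>a c\<bar> * norm (EE t *v (w c - wi c)))" by (rule sum_cols)
  also have "\<dots> \<le> (\<Sum>j\<in>{1..r}. \<Sum>c\<in>G j. \<bar>a c\<bar> * exp (t * gam j) * FF t)"
  proof (intro sum_mono)
    fix j c assume j: "j \<in> {1..r}" and c: "c \<in> G j"
    have "norm (EE t *v (w c - wi c)) \<le> exp (t * gam j) * fc j c t" by (rule tail_bound[OF j c])
    also have "\<dots> \<le> exp (t * gam j) * FF t" using fc_le_FF[OF j c] by simp
    finally show "\<bar>a c\<bar> * norm (EE t *v (w c - wi c)) \<le> \<bar>a c\<bar> * exp (t * gam j) * FF t"
      by (simp add: mult_left_mono mult.assoc)
  qed
  also have "\<dots> = FF t * XX a t" unfolding XX_def by (simp add: sum_distrib_left mult_ac)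
  finally show ?thesis .
qed

lemma main_lim:
  "((\<lambda>t::real. onorm (\<lambda>x. oproj ((\<lambda>v. EE t *v v) ` V) x - oproj ((\<lambda>v. EE t *v v) ` span (wi ` {..<s})) x)) \<longlongrightarrow> 0) at_top"
proof -
  obtain D1 where D1p: "D1 > 0" and D1: "\<forall>t\<ge>0. \<forall>a S. 0 \<le> S \<longrightarrow> (\<forall>j\<in>{1..r}. exp (t * gam j) * norm (blk (Suc (kk j)) (\<Sum>c<s. a c *\<^sub>R w c)) \<le> S)
      \<longrightarrow> XX a t \<le> D1 * S" using L_w by blast
  obtain D2 where D2p: "D2 > 0" and D2: "\<forall>t\<ge>0. \<forall>a S. 0 \<le> S \<longrightarrow> (\<forall>j\<in>{1..r}. exp (t * gam j) * norm (blk (Suc (kk j)) (\<Sum>c<s. a c *\<^sub>R wi c)) \<le> S)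
      \<longrightarrow> XX a t \<le> D2 * S" using L_wi by blast
  have injw: "inj_on w {..<s}" by (rule indep_at0(1)[OF D1])
  have injwi: "inj_on wi {..<s}" by (rule indep_at0(1)[OF D2])
  have Kb0: "0 \<le> Kb" unfolding Kb_def using KB_ge1 by (intro sum_nonneg) (auto intro: order_trans[OF zero_le_one])
  define \<theta> where "\<theta> t = Kb * (D1 + D2) * FF t" for t
  have th0: "0 \<le> \<theta> t" for t unfolding \<theta>_def using Kb0 D1p D2p FF_nonneg by simp
  have bound: "norm (oproj ((\<lambda>v. EE t *v v) ` V) x - oproj ((\<lambda>v. EE t *v v) ` span (wi ` {..<s})) x) \<le> 2 * \<theta> t * norm x"
    if t: "0 \<le> t" for t x
  proof (rule proj_diff)
    have lin: "linear ((*v) (EE t))" by simp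
    have sV: "subspace V" using spanV subspace_span by metis
    show "subspace ((\<lambda>v. EE t *v v) ` V)" using linear_subspace_image[OF lin sV] by simp
    show "subspace ((\<lambda>v. EE t *v v) ` span (wi ` {..<s}))"
      using linear_subspace_image[OF lin subspace_span] by simp
    show "0 \<le> \<theta> t" by (rule th0)
    show "\<exists>w'\<in>(\<lambda>v. EE t *v v) ` span (wi ` {..<s}). norm (u - w') \<le> \<theta> t * norm u"
      if u: "u \<in> (\<lambda>v. EE t *v v) ` V" for u
    proof -
      obtain v where v: "v \<in> V" "u = EE t *v v" using u by blast
      obtain a where a: "v = (\<Sum>c<s. a c *\<^sub>R w c)" using span_repr[OF injw] v(1) spanV by blast
      have mem: "(\<Sum>c<s. a c *\<^sub>R wi c) \<in> span (wi ` {..<s})"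
        by (intro span_sum span_scale span_base) auto
      have "norm (u - EE t *v (\<Sum>c<s. a c *\<^sub>R wi c)) \<le> FF t * XX a t"
        unfolding v(2) a by (rule diff_bound)
      also have "\<dots> \<le> FF t * (D1 * (Kb * norm u))"
        unfolding v(2) a using lower_E[OF D1 t, of a] FF_nonneg by (simp add: mult_left_mono)
      also have "\<dots> \<le> \<theta> t * norm u" unfolding \<theta>_def
        using FF_nonneg Kb0 D2p by (simp add: algebra_simps mult_left_mono mult_right_mono)
      finally show ?thesis using mem by blast
    qed
    show "\<exists>u\<in>(\<lambda>v. EE t *v v) ` V. norm (w' - u) \<le> \<theta> t * norm w'"
      if w': "w' \<in> (\<lambda>v. EE t *v v) ` span (wi ` {..<s})" for w'
    proof -
      obtain v where v: "v \<in> span (wi ` {..<s})" "w' = EE t *v v" using w' by blast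
      obtain a where a: "v = (\<Sum>c<s. a c *\<^sub>R wi c)" using span_repr[OF injwi] v(1) by blast
      have mem: "(\<Sum>c<s. a c *\<^sub>R w c) \<in> V"
        unfolding spanV[symmetric] by (intro span_sum span_scale span_base) auto
      have "norm (w' - EE t *v (\<Sum>c<s. a c *\<^sub>R w c)) \<le> FF t * XX a t"
        unfolding v(2) a using diff_bound[of t a] by (simp add: norm_minus_commute)
      also have "\<dots> \<le> FF t * (D2 * (Kb * norm w'))"
        unfolding v(2) a using lower_E[OF D2 t, of a] FF_nonneg by (simp add: mult_left_mono)
      also have "\<dots> \<le> \<theta> t * norm w'" unfolding \<theta>_def
        using FF_nonneg Kb0 D1p by (simp add: algebra_simps mult_left_mono mult_right_mono)
      finally show ?thesis using mem by blast
    qed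
  qed
  have ev: "\<forall>\<^sub>F t in at_top. norm (onorm (\<lambda>x. oproj ((\<lambda>v. EE t *v v) ` V) x - oproj ((\<lambda>v. EE t *v v) ` span (wi ` {..<s})) x)) \<le> 2 * \<theta> t"
    using eventually_ge_at_top[of "0::real"]
  proof eventually_elim
    case (elim t)
    have ub: "onorm (\<lambda>x. oproj ((\<lambda>v. EE t *v v) ` V) x - oproj ((\<lambda>v. EE t *v v) ` span (wi ` {..<s})) x) \<le> 2 * \<theta> t"
      by (rule onorm_bound) (use bound[OF elim] th0 in auto)
    have lb: "0 \<le> onorm (\<lambda>x. oproj ((\<lambda>v. EE t *v v) ` V) x - oproj ((\<lambda>v. EE t *v v) ` span (wi ` {..<s})) x)"
      by (rule onorm_nonneg_of_bound[OF bound[OF elim]])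
    show ?case using ub lb by simp
  qed
  have "((\<lambda>t. 2 * \<theta> t) \<longlongrightarrow> 0) at_top"
    unfolding \<theta>_def using tendsto_mult_right_zero[OF FF_tendsto, of "2 * (Kb * (D1 + D2))"]
    by (simp add: mult_ac)
  from Lim_null_comparison[OF ev this] show ?thesis .
qed

end


theorem lemma4p10:
  fixes idx :: "'n::finite \<Rightarrow> nat"
    and k :: nat and dz :: "nat \<Rightarrow> nat"
    and \<beta> \<omega> \<rho> :: "nat \<Rightarrow> real"
    and V :: "(real^'n) set" and s :: nat
    and w :: "nat \<Rightarrow> real^'n" and r :: nat and b kk :: "nat \<Rightarrow> nat"
  assumes idx: "bij_betw idx UNIV {..<CARD('n)}"
    and dz: "\<forall>j\<in>{1..k}. dz j \<in> {1,2}"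
    and dsum: "(\<Sum>j\<in>{1..k}. dz j) = CARD('n)"
    and cplx: "\<forall>j\<in>{1..k}. dz j = 2 \<longrightarrow> \<omega> j > 0 \<and> 0 < \<rho> j \<and> \<rho> j \<le> 1"
    and mono: "\<forall>i j. 1 \<le> i \<and> i \<le> j \<and> j \<le> k \<longrightarrow> \<beta> j \<le> \<beta> i"
    and C: "\<forall>j\<in>{1..k}. dz j = 2 \<longrightarrow> (\<forall>\<nu>\<in>{1..k}. \<nu> \<noteq> j \<longrightarrow> \<beta> j \<noteq> \<beta> \<nu>)"
    and V: "V \<in> grassmannian s"
    and W: "block_col_echelon idx k dz V s w r b kk"
  shows "span (winf idx k dz \<beta> w r b kk ` {..<s}) \<in> grassmannian s \<and>
    ((\<lambda>t::real. onorm (\<lambda>x.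
        oproj ((\<lambda>v. mexp (t *\<^sub>R blockA idx k dz \<beta> \<omega> \<rho>) *v v) ` V) x
      - oproj ((\<lambda>v. mexp (t *\<^sub>R blockA idx k dz \<beta> \<omega> \<rho>) *v v) ` span (winf idx k dz \<beta> w r b kk ` {..<s})) x))
     \<longlongrightarrow> 0) at_top"
proof -
  have bcol: "span (w ` {..<s}) = V \<and>
     (\<forall>j\<in>{1..r}. b j \<in> {1,2}) \<and> (\<Sum>j\<in>{1..r}. b j) = s \<and>
     (\<forall>j\<in>{1..r}. kk j < k) \<and> (\<forall>j\<in>{1..<r}. kk j < kk (Suc j)) \<and>
     (\<forall>j\<in>{1..r}. \<forall>i\<in>{1..kk j}. \<forall>c\<in>{boff b j..<boff b j + b j}.
         rowrestr idx dz i (w c) = 0) \<and>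
     (\<forall>j\<in>{1..r}. rank_block idx dz (Suc (kk j)) w (boff b j) (b j) = b j)"
    using W unfolding block_col_echelon_def .
  interpret E: ech2 idx k dz \<beta> \<omega> \<rho> s r b kk V w
    by (unfold_locales) (use idx dz dsum cplx mono bcol in auto)
  show ?thesis using E.conj1 E.main_lim unfolding E.EE_def by simp
qed


end
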